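(* Let $(u_0,v_0)\in\mathrm{L}^2(\mathbb{R})$ and, for each $\tau>0$, let $(u^{(\tau)},v^{(\tau)})$ be a time-splitting solution with mesh $\tau$ whose piecewise constant initial data satisfy $\|u^{(\tau)}(\cdot,0)-u_0\|_{\mathrm{L}^2}+\|v^{(\tau)}(\cdot,0)-v_0\|_{\mathrm{L}^2}\to0$ as $\tau\to0+$. Let $T>0$. There exist $\tau_*\in(0,1)$ and a constant $C_1(T)>0$ such that for every $\varepsilon>0$ there is $\delta_1>0$ with the following property: for all $\tau\in(0,\min\{\delta_1,\tau_*\})$, all $h\in(0,\delta_1)$ and all $t_0\ge0$ with $t_0+h\le T$, $$\int_{\mathbb{R}}|u^{(\tau)}(x+h,t_0+h)-u^{(\tau)}(x,t_0)|^2\,dx<C_1(T)(\varepsilon+\tau),\qquad \int_{\mathbb{R}}|v^{(\tau)}(x-h,t_0+h)-v^{(\tau)}(x,t_0)|^2\,dx<C_1(T)(\varepsilon+\tau).$$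
   Context: Fix constants $m\ge 0$ and $\alpha,\beta\in\mathbb{R}$. Let (N) denote the ODE system on $\mathbb{C}^2$: $\frac{du}{ds}=imv+i\alpha u|v|^2+2i\beta(\bar u v+u\bar v)v$, $\frac{dv}{ds}=imu+i\alpha v|u|^2+2i\beta(\bar u v+u\bar v)u$. Time-splitting scheme with mesh $\tau>0$: given $(u_j^0,v_j^0)_{j\in\mathbb{Z}}\subset\mathbb{C}^2$ with $\sum_j(|u_j^0|^2+|v_j^0|^2)<\infty$, set $(u^{(\tau)},v^{(\tau)})(x,0)=(u_j^0,v_j^0)$ for $x\in[j\tau,(j+1)\tau)$. Inductively, once $(u^{(\tau)},v^{(\tau)})(\cdot,n\tau)$ is defined, set for $t\in[n\tau,(n+1)\tau)$: $u^{(\tau)}(x,t)=u^{(\tau)}(x-(t-n\tau),n\tau)$, $v^{(\tau)}(x,t)=v^{(\tau)}(x+(t-n\tau),n\tau)$; let $(u^{(\tau)},v^{(\tau)})(x,(n+1)\tau-)$ be the left limit in $t$; and for each $x$ define $(u^{(\tau)},v^{(\tau)})(x,(n+1)\tau)$ as the value at $s=\tau$ of the solution of (N) with value $(u^{(\tau)},v^{(\tau)})(x,(n+1)\tau-)$ at $s=0$ (this is globally well defined). *)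

theory Defs
  imports "HOL-Analysis.Analysis"
begin

definition N_field :: "real \<Rightarrow> real \<Rightarrow> real \<Rightarrow> complex \<times> complex \<Rightarrow> complex \<times> complex" where
  "N_field m \<alpha> \<beta> p =
     (let u = fst p; v = snd p; q = cnj u * v + u * cnj v in
      (\<i> * of_real m * v + \<i> * of_real \<alpha> * u * of_real ((cmod v)^2) + 2 * \<i> * of_real \<beta> * q * v,
       \<i> * of_real m * u + \<i> * of_real \<alpha> * v * of_real ((cmod u)^2) + 2 * \<i> * of_real \<beta> * q * u))"

definition N_flow :: "real \<Rightarrow> real \<Rightarrow> real \<Rightarrow> real \<Rightarrow> complex \<times> complex \<Rightarrow> complex \<times> complex" where
  "N_flow m \<alpha> \<beta> s p =
     (THE q. \<exists>w. w 0 = p \<and> w s = q \<and>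
        (\<forall>r\<in>{0..s}. (w has_vector_derivative N_field m \<alpha> \<beta> (w r)) (at r within {0..s})))"

text \<open>Values of the time-splitting solution at the grid times n*tau (after the nonlinear step).
  The left limit at (n+1)tau- of the transported piecewise-constant (right-continuous) data
  is (u(x - tau, n tau), v(x + tau, n tau)).\<close>
fun ts_grid :: "real \<Rightarrow> real \<Rightarrow> real \<Rightarrow> real \<Rightarrow> (int \<Rightarrow> complex \<times> complex) \<Rightarrow> nat \<Rightarrow> real \<Rightarrow> complex \<times> complex" where
  "ts_grid m \<alpha> \<beta> \<tau> d 0 x = d \<lfloor>x / \<tau>\<rfloor>"
| "ts_grid m \<alpha> \<beta> \<tau> d (Suc n) x =
     N_flow m \<alpha> \<beta> \<tau> (fst (ts_grid m \<alpha> \<beta> \<tau> d n (x - \<tau>)), snd (ts_grid m \<alpha> \<beta> \<tau> d n (x + \<tau>)))"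

definition ts_u :: "real \<Rightarrow> real \<Rightarrow> real \<Rightarrow> real \<Rightarrow> (int \<Rightarrow> complex \<times> complex) \<Rightarrow> real \<Rightarrow> real \<Rightarrow> complex" where
  "ts_u m \<alpha> \<beta> \<tau> d x t =
     (let n = nat \<lfloor>t / \<tau>\<rfloor> in fst (ts_grid m \<alpha> \<beta> \<tau> d n (x - (t - real n * \<tau>))))"

definition ts_v :: "real \<Rightarrow> real \<Rightarrow> real \<Rightarrow> real \<Rightarrow> (int \<Rightarrow> complex \<times> complex) \<Rightarrow> real \<Rightarrow> real \<Rightarrow> complex" where
  "ts_v m \<alpha> \<beta> \<tau> d x t =
     (let n = nat \<lfloor>t / \<tau>\<rfloor> in snd (ts_grid m \<alpha> \<beta> \<tau> d n (x + (t - real n * \<tau>))))"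

end

theory Submission
  imports Defs "HOL-Analysis.Analysis"
begin


lemma N_field_orth: "p \<bullet> N_field m \<alpha> \<beta> p = 0"
proof (cases p)
  case (Pair u v)
  show ?thesis unfolding Pair N_field_def Let_def
    by (simp add: inner_complex_def inner_prod_def cmod_power2 algebra_simps)
qed

lemma N_field_swap: "N_field m \<alpha> \<beta> (snd p, fst p) = (snd (N_field m \<alpha> \<beta> p), fst (N_field m \<alpha> \<beta> p))"
  unfolding N_field_def Let_def by (simp add: algebra_simps)

lemma tri_lip:
  fixes x1 y1 w1 x2 y2 w2 :: complex
  assumes "norm x1 \<le> R" "norm y1 \<le> R" "norm w1 \<le> R" "norm x2 \<le> R" "norm y2 \<le> R" "norm w2 \<le> R"
  shows "norm (x1 * y1 * w1 - x2 * y2 * w2) \<le> R^2 * (norm (x1-x2) + norm (y1-y2) + norm (w1-w2))"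
proof -
  have e: "x1 * y1 * w1 - x2 * y2 * w2 = (x1-x2)*y1 * w1 + x2*(y1-y2)*w1 + x2 * y2*(w1-w2)" by (simp add: algebra_simps)
  have R0: "0 \<le> R" using assms(1) norm_ge_zero order_trans by blast
  have a: "norm ((x1-x2)*y1 * w1) \<le> R^2 * norm (x1-x2)"
  proof -
    have "norm y1 * norm w1 * norm (x1-x2) \<le> (R * R) * norm (x1-x2)"
      using mult_mono[OF assms(2) assms(3)] R0 by (simp add: mult_right_mono)
    then show ?thesis unfolding norm_mult by (simp add: power2_eq_square mult_ac)
  qed
  have b: "norm (x2*(y1-y2)*w1) \<le> R^2 * norm (y1-y2)"
    unfolding norm_mult using mult_mono[OF assms(4) assms(3)] R0
    by (metis mult.commute mult.left_commute mult_right_mono norm_ge_zero power2_eq_square)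
  have c: "norm (x2 * y2*(w1-w2)) \<le> R^2 * norm (w1-w2)"
    unfolding norm_mult using mult_mono[OF assms(4) assms(5)] R0
    by (metis mult_right_mono norm_ge_zero power2_eq_square)
  have "norm ((x1-x2) * y1 * w1 + x2 * (y1-y2) * w1 + x2 * y2 * (w1-w2)) \<le> norm ((x1-x2) * y1 * w1) + norm (x2 * (y1-y2) * w1) + norm (x2 * y2 * (w1-w2))"
    using norm_triangle_ineq[of "(x1-x2) * y1 * w1 + x2 * (y1-y2) * w1" "x2 * y2 * (w1-w2)"] norm_triangle_ineq[of "(x1-x2) * y1 * w1" "x2 * (y1-y2) * w1"] by linarith
  then show ?thesis unfolding e using a b c by (simp add: distrib_left)
qed

lemma norm4: "norm (a+b+c+d) \<le> norm a + norm b + norm c + norm (d::'a::real_normed_vector)"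
  using norm_triangle_ineq[of "a+b+c" d] norm_triangle_ineq[of "a+b" c] norm_triangle_ineq[of a b] by linarith

definition Lc :: "real \<Rightarrow> real \<Rightarrow> real \<Rightarrow> real \<Rightarrow> real" where
  "Lc m \<alpha> \<beta> R = 2 * (m + (3 * \<bar>\<alpha>\<bar> + 12 * \<bar>\<beta>\<bar>) * R^2)"

lemma N_field_comp_lip:
  fixes u1 v1 u2 v2 :: complex
  assumes m: "m \<ge> 0" and n: "norm u1 \<le> R" "norm v1 \<le> R" "norm u2 \<le> R" "norm v2 \<le> R"
    and d: "norm (u1 - u2) \<le> D" "norm (v1 - v2) \<le> D"
  shows "norm (\<i> * of_real m * v1 + \<i> * of_real \<alpha> * u1 * of_real ((cmod v1)^2) + 2 * \<i> * of_real \<beta> * (cnj u1 * v1 + u1 * cnj v1) * v1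
     - (\<i> * of_real m * v2 + \<i> * of_real \<alpha> * u2 * of_real ((cmod v2)^2) + 2 * \<i> * of_real \<beta> * (cnj u2 * v2 + u2 * cnj v2) * v2))
     \<le> (m + (3 * \<bar>\<alpha>\<bar> + 12 * \<bar>\<beta>\<bar>) * R^2) * D"
proof -
  have sq: "\<And>v. (of_real ((cmod v)^2) :: complex) = v * cnj v" by (metis complex_norm_square of_real_power)
  have e: "(\<i> * of_real m * v1 + \<i> * of_real \<alpha> * u1 * of_real ((cmod v1)^2) + 2 * \<i> * of_real \<beta> * (cnj u1 * v1 + u1 * cnj v1) * v1
     - (\<i> * of_real m * v2 + \<i> * of_real \<alpha> * u2 * of_real ((cmod v2)^2) + 2 * \<i> * of_real \<beta> * (cnj u2 * v2 + u2 * cnj v2) * v2))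
     = \<i> * of_real m * (v1 - v2) + \<i> * of_real \<alpha> * (u1 * v1 * cnj v1 - u2 * v2 * cnj v2)
       + 2 * \<i> * of_real \<beta> * (cnj u1 * v1 * v1 - cnj u2 * v2 * v2) + 2 * \<i> * of_real \<beta> * (u1 * cnj v1 * v1 - u2 * cnj v2 * v2)"
    unfolding sq by (simp add: algebra_simps)
  have t1: "norm (\<i> * of_real m * (v1 - v2)) \<le> m * D" using d m by (simp add: norm_mult mult_left_mono)
  have t2: "norm (u1 * v1 * cnj v1 - u2 * v2 * cnj v2) \<le> R^2 * (3 * D)"
  proof -
    have "norm (u1 * v1 * cnj v1 - u2 * v2 * cnj v2) \<le> R^2 * (norm (u1-u2) + norm (v1-v2) + norm (cnj v1 - cnj v2))"
      by (rule tri_lip) (use n in auto)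
    also have "\<dots> \<le> R^2 * (3 * D)"
      by (rule mult_left_mono) (use d in \<open>auto simp flip: complex_cnj_diff\<close>)
    finally show ?thesis .
  qed
  have t3: "norm (cnj u1 * v1 * v1 - cnj u2 * v2 * v2) \<le> R^2 * (3 * D)"
  proof -
    have "norm (cnj u1 * v1 * v1 - cnj u2 * v2 * v2) \<le> R^2 * (norm (cnj u1 - cnj u2) + norm (v1-v2) + norm (v1 - v2))"
      by (rule tri_lip) (use n in auto)
    also have "\<dots> \<le> R^2 * (3 * D)"
      by (rule mult_left_mono) (use d in \<open>auto simp flip: complex_cnj_diff\<close>)
    finally show ?thesis .
  qed
  have t4: "norm (u1 * cnj v1 * v1 - u2 * cnj v2 * v2) \<le> R^2 * (3 * D)"
  proof -
    have "norm (u1 * cnj v1 * v1 - u2 * cnj v2 * v2) \<le> R^2 * (norm (u1-u2) + norm (cnj v1 - cnj v2) + norm (v1 - v2))"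
      by (rule tri_lip) (use n in auto)
    also have "\<dots> \<le> R^2 * (3 * D)"
      by (rule mult_left_mono) (use d in \<open>auto simp flip: complex_cnj_diff\<close>)
    finally show ?thesis .
  qed
  have t2': "norm (\<i> * of_real \<alpha> * (u1 * v1 * cnj v1 - u2 * v2 * cnj v2)) \<le> \<bar>\<alpha>\<bar> * (R^2 * (3 * D))"
    using mult_left_mono[OF t2, of "\<bar>\<alpha>\<bar>"] by (simp add: norm_mult mult_ac)
  have t3': "norm (2 * \<i> * of_real \<beta> * (cnj u1 * v1 * v1 - cnj u2 * v2 * v2)) \<le> 2 * \<bar>\<beta>\<bar> * (R^2 * (3 * D))"
  proof -
    have "norm (2 * \<i> * of_real \<beta> * (cnj u1 * v1 * v1 - cnj u2 * v2 * v2)) = 2 * \<bar>\<beta>\<bar> * norm (cnj u1 * v1 * v1 - cnj u2 * v2 * v2)" by (simp add: norm_mult)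
    then show ?thesis using mult_left_mono[OF t3, of "2 * \<bar>\<beta>\<bar>"] by simp
  qed
  have t4': "norm (2 * \<i> * of_real \<beta> * (u1 * cnj v1 * v1 - u2 * cnj v2 * v2)) \<le> 2 * \<bar>\<beta>\<bar> * (R^2 * (3 * D))"
  proof -
    have "norm (2 * \<i> * of_real \<beta> * (u1 * cnj v1 * v1 - u2 * cnj v2 * v2)) = 2 * \<bar>\<beta>\<bar> * norm (u1 * cnj v1 * v1 - u2 * cnj v2 * v2)" by (simp add: norm_mult)
    then show ?thesis using mult_left_mono[OF t4, of "2 * \<bar>\<beta>\<bar>"] by simp
  qed
  have "norm (\<i> * of_real m * (v1 - v2) + \<i> * of_real \<alpha> * (u1 * v1 * cnj v1 - u2 * v2 * cnj v2)
       + 2 * \<i> * of_real \<beta> * (cnj u1 * v1 * v1 - cnj u2 * v2 * v2) + 2 * \<i> * of_real \<beta> * (u1 * cnj v1 * v1 - u2 * cnj v2 * v2))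
     \<le> m * D + \<bar>\<alpha>\<bar> * (R^2 * (3 * D)) + 2 * \<bar>\<beta>\<bar> * (R^2 * (3 * D)) + 2 * \<bar>\<beta>\<bar> * (R^2 * (3 * D))"
    using t1 t2' t3' t4' norm4 by (smt (verit))
  also have "\<dots> \<le> (m + (3 * \<bar>\<alpha>\<bar> + 12 * \<bar>\<beta>\<bar>) * R^2) * D"
    by (simp add: algebra_simps)
  finally show ?thesis unfolding e .
qed

lemma N_field_lip:
  assumes m: "m \<ge> 0" and n: "norm z1 \<le> R" "norm z2 \<le> R"
  shows "norm (N_field m \<alpha> \<beta> z1 - N_field m \<alpha> \<beta> z2) \<le> Lc m \<alpha> \<beta> R * norm (z1 - z2)"
proof (cases z1; cases z2)
  fix u1 v1 u2 v2 assume z: "z1 = (u1, v1)" "z2 = (u2, v2)"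
  have nn: "norm u1 \<le> R" "norm v1 \<le> R" "norm u2 \<le> R" "norm v2 \<le> R"
    using n z norm_fst_le[of u1 v1] norm_snd_le[of v1 u1] norm_fst_le[of u2 v2] norm_snd_le[of v2 u2] by auto
  have dd: "norm (u1 - u2) \<le> norm (z1 - z2)" "norm (v1 - v2) \<le> norm (z1 - z2)"
    using z norm_fst_le[of "u1 - u2" "v1 - v2"] norm_snd_le[of "v1 - v2" "u1 - u2"] by auto
  note c1 = N_field_comp_lip[OF m nn dd, of \<alpha> \<beta>]
  note c2 = N_field_comp_lip[OF m nn(2) nn(1) nn(4) nn(3) dd(2) dd(1), of \<alpha> \<beta>]
  have eq2: "(cnj v1 * u1 + v1 * cnj u1) = (cnj u1 * v1 + u1 * cnj v1)" "(cnj v2 * u2 + v2 * cnj u2) = (cnj u2 * v2 + u2 * cnj v2)"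
    by (simp_all add: algebra_simps)
  have "norm (N_field m \<alpha> \<beta> z1 - N_field m \<alpha> \<beta> z2)
      \<le> norm (fst (N_field m \<alpha> \<beta> z1 - N_field m \<alpha> \<beta> z2)) + norm (snd (N_field m \<alpha> \<beta> z1 - N_field m \<alpha> \<beta> z2))"
    using norm_Pair_le[of "fst (N_field m \<alpha> \<beta> z1 - N_field m \<alpha> \<beta> z2)" "snd (N_field m \<alpha> \<beta> z1 - N_field m \<alpha> \<beta> z2)"] by (simp del: fst_diff snd_diff)
  also have "\<dots> \<le> (m + (3 * \<bar>\<alpha>\<bar> + 12 * \<bar>\<beta>\<bar>) * R^2) * norm (z1 - z2) + (m + (3 * \<bar>\<alpha>\<bar> + 12 * \<bar>\<beta>\<bar>) * R^2) * norm (z1 - z2)"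
    using c1 c2 unfolding z N_field_def Let_def eq2 by (intro add_mono) simp_all
  finally show ?thesis unfolding Lc_def z by (simp add: algebra_simps)
qed

lemma Lc_nonneg: "m \<ge> 0 \<Longrightarrow> Lc m \<alpha> \<beta> R \<ge> 0"
  unfolding Lc_def by simp

lemma gronwall:
  fixes f f' :: "real \<Rightarrow> real"
  assumes s: "0 \<le> s" and L: "0 < L"
    and der: "\<And>t. t \<in> {0..s} \<Longrightarrow> (f has_real_derivative f' t) (at t within {0..s})"
    and le: "\<And>t. t \<in> {0..s} \<Longrightarrow> f' t \<le> L * f t + c"
    and t: "t \<in> {0..s}"
  shows "f t + c / L \<le> (f 0 + c / L) * exp (L * t)"
proof -
  define g where "g x = (f x + c / L) * exp (- (L * x))" for x
  define g' where "g' x = f' x * exp (- (L * x)) + (f x + c / L) * (exp (- (L * x)) * (- L))" for x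
  have dg: "(g has_real_derivative g' x) (at x within {0..t})" if "x \<in> {0..t}" for x
  proof -
    have "(f has_real_derivative f' x) (at x within {0..t})"
      using der[of x] that t by (auto intro: DERIV_subset)
    then show ?thesis unfolding g_def g'_def
      by (auto intro!: derivative_eq_intros)
  qed
  have "\<exists>x\<in>{0..t}. g t - g 0 = (\<lambda>h. g' x * h) (t - 0)"
    by (rule mvt_very_simple) (use t dg in \<open>auto simp: has_field_derivative_def\<close>)
  then obtain x where x: "x \<in> {0..t}" "g t - g 0 = t * g' x" by auto
  have "g' x = (f' x - L * f x - c) * exp (- (L * x))"
    unfolding g'_def using L by (simp add: field_simps)
  also have "\<dots> \<le> 0" using le[of x] x t by (intro mult_nonpos_nonneg) auto
  finally have "g t \<le> g 0" using x t by (smt (verit) atLeastAtMost_iff mult_nonneg_nonpos)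
  then have "(f t + c / L) * exp (- (L * t)) \<le> f 0 + c / L" unfolding g_def by simp
  then have "(f t + c / L) * exp (- (L * t)) * exp (L * t) \<le> (f 0 + c / L) * exp (L * t)"
    by (simp add: mult_right_mono)
  then show ?thesis by (simp add: mult.assoc flip: exp_add)
qed

definition is_sol :: "((complex \<times> complex) \<Rightarrow> (complex \<times> complex)) \<Rightarrow> real \<Rightarrow> (complex \<times> complex) \<Rightarrow> (real \<Rightarrow> complex \<times> complex) \<Rightarrow> bool" where
  "is_sol H s p w \<longleftrightarrow> w 0 = p \<and> (\<forall>r\<in>{0..s}. (w has_vector_derivative H (w r)) (at r within {0..s}))"

lemma sol_der_sub:
  assumes "is_sol H s p w" "t \<in> {0..s}" "r \<in> {0..t}"
  shows "(w has_vector_derivative H (w r)) (at r within {0..t})"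
proof -
  have "(w has_vector_derivative H (w r)) (at r within {0..s})" using assms unfolding is_sol_def by auto
  then show ?thesis by (rule has_vector_derivative_within_subset) (use assms in auto)
qed

lemma sol_cons:
  assumes orth: "\<And>z. z \<bullet> H z = 0" and sol: "is_sol H s p w" and t: "t \<in> {0..s}"
  shows "norm (w t) = norm p"
proof -
  have d: "((\<lambda>x. w x \<bullet> w x) has_real_derivative 0) (at r within {0..t})" if "r \<in> {0..t}" for r
  proof -
    have "((\<lambda>x. w x \<bullet> w x) has_vector_derivative (w r \<bullet> H (w r) + H (w r) \<bullet> w r)) (at r within {0..t})"
      by (rule bounded_bilinear.has_vector_derivative[OF bounded_bilinear_inner]) (use sol_der_sub[OF sol t that] in auto)
    then show ?thesis using orth[of "w r"] by (simp add: inner_commute has_real_derivative_iff_has_vector_derivative)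
  qed
  have "\<exists>x\<in>{0..t}. (\<lambda>x. w x \<bullet> w x) t - (\<lambda>x. w x \<bullet> w x) 0 = (\<lambda>h. 0 * h) (t - 0)"
  proof (rule mvt_very_simple)
    fix x assume "0 \<le> x" "x \<le> t"
    then have "((\<lambda>x. w x \<bullet> w x) has_derivative (*) 0) (at x within {0..t})"
      using d[of x] by (simp add: has_field_derivative_def)
    moreover have "((*) (0::real)) = (\<lambda>h. 0 * h)" by auto
    ultimately show "((\<lambda>x. w x \<bullet> w x) has_derivative (\<lambda>h. 0 * h)) (at x within {0..t})" by simp
  qed (use t in auto)
  then have "w t \<bullet> w t = w 0 \<bullet> w 0" by auto
  then show ?thesis using sol unfolding is_sol_def by (simp add: norm_eq_sqrt_inner)
qed

lemma sol_unique:
  assumes sol1: "is_sol H s p w1" and sol2: "is_sol H s p w2" and s: "0 \<le> s"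
    and lip: "\<And>z1 z2. norm z1 \<le> R \<Longrightarrow> norm z2 \<le> R \<Longrightarrow> norm (H z1 - H z2) \<le> L * norm (z1 - z2)"
    and L: "0 \<le> L"
    and b1: "\<And>t. t \<in> {0..s} \<Longrightarrow> norm (w1 t) \<le> R" and b2: "\<And>t. t \<in> {0..s} \<Longrightarrow> norm (w2 t) \<le> R"
    and t: "t \<in> {0..s}"
  shows "w1 t = w2 t"
proof -
  define f where "f x = (w1 x - w2 x) \<bullet> (w1 x - w2 x)" for x
  define f' where "f' x = 2 * ((w1 x - w2 x) \<bullet> (H (w1 x) - H (w2 x)))" for x
  have d: "(f has_real_derivative f' r) (at r within {0..s})" if "r \<in> {0..s}" for r
  proof -
    have dw: "((\<lambda>x. w1 x - w2 x) has_vector_derivative (H (w1 r) - H (w2 r))) (at r within {0..s})"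
      using sol1 sol2 that unfolding is_sol_def by (auto intro!: derivative_eq_intros)
    have "(f has_vector_derivative ((w1 r - w2 r) \<bullet> (H (w1 r) - H (w2 r)) + (H (w1 r) - H (w2 r)) \<bullet> (w1 r - w2 r))) (at r within {0..s})"
      unfolding f_def by (rule bounded_bilinear.has_vector_derivative[OF bounded_bilinear_inner dw dw])
    then show ?thesis unfolding f'_def by (simp add: inner_commute has_real_derivative_iff_has_vector_derivative)
  qed
  have le: "f' r \<le> (2 * L + 1) * f r + 0" if "r \<in> {0..s}" for r
  proof -
    have "f' r \<le> 2 * (norm (w1 r - w2 r) * norm (H (w1 r) - H (w2 r)))"
      unfolding f'_def using Cauchy_Schwarz_ineq2 by (smt (verit) norm_cauchy_schwarz)
    also have "\<dots> \<le> 2 * (norm (w1 r - w2 r) * (L * norm (w1 r - w2 r)))"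
      using lip[OF b1[OF that] b2[OF that]] by (simp add: mult_left_mono)
    also have "\<dots> = 2 * L * f r" unfolding f_def by (simp add: power2_norm_eq_inner[symmetric] power2_eq_square)
    also have "\<dots> \<le> (2 * L + 1) * f r" unfolding f_def by (simp add: mult_right_mono)
    finally show ?thesis by simp
  qed
  have "f t + 0 / (2 * L + 1) \<le> (f 0 + 0 / (2 * L + 1)) * exp ((2 * L + 1) * t)"
    by (rule gronwall[OF s _ d le t]) (use L in auto)
  moreover have "f 0 = 0" using sol1 sol2 unfolding is_sol_def f_def by simp
  ultimately have "f t \<le> 0" by simp
  then show ?thesis unfolding f_def by (metis inner_ge_zero inner_eq_zero_iff eq_iff_diff_eq_0 order_antisym)
qed


definition proj :: "real \<Rightarrow> complex \<times> complex \<Rightarrow> complex \<times> complex" where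
  "proj R z = (if norm z \<le> R then z else (R / norm z) *\<^sub>R z)"

lemma proj_norm: "0 \<le> R \<Longrightarrow> norm (proj R z) \<le> R"
  unfolding proj_def by auto

lemma unit_diff:
  fixes x y :: "'a::real_normed_vector"
  assumes "x \<noteq> 0" "y \<noteq> 0"
  shows "norm ((1 / norm x) *\<^sub>R x - (1 / norm y) *\<^sub>R y) \<le> 2 * norm (x - y) / norm x"
proof -
  have nx: "norm x > 0" using assms by simp
  have "(1 / norm x) *\<^sub>R x - (1 / norm y) *\<^sub>R y = (1 / norm x) *\<^sub>R (x - y) + (1 / norm x - 1 / norm y) *\<^sub>R y"
    by (simp add: algebra_simps)
  then have "norm ((1 / norm x) *\<^sub>R x - (1 / norm y) *\<^sub>R y) \<le> norm (x - y) / norm x + \<bar>1 / norm x - 1 / norm y\<bar> * norm y"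
    using norm_triangle_ineq[of "(1 / norm x) *\<^sub>R (x - y)" "(1 / norm x - 1 / norm y) *\<^sub>R y"] by simp
  also have "\<bar>1 / norm x - 1 / norm y\<bar> * norm y = \<bar>norm y - norm x\<bar> / norm x"
    using assms by (simp add: field_simps abs_div)
  also have "\<bar>norm y - norm x\<bar> \<le> norm (x - y)"
    by (metis abs_minus_commute norm_triangle_ineq3)
  finally show ?thesis using nx by (simp add: divide_right_mono add_divide_distrib[symmetric])
qed

lemma proj_lip:
  assumes R: "0 < R"
  shows "norm (proj R z1 - proj R z2) \<le> 2 * norm (z1 - z2)"
proof -
  consider "norm z1 \<le> R" "norm z2 \<le> R" | "norm z1 \<le> R" "norm z2 > R" | "norm z1 > R" "norm z2 \<le> R" | "norm z1 > R" "norm z2 > R"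
    by linarith
  then show ?thesis
  proof cases
    case 1 then show ?thesis unfolding proj_def by simp
  next
    case 2
    have "norm (z1 - (R / norm z2) *\<^sub>R z2) \<le> norm (z1 - z2) + norm (z2 - (R / norm z2) *\<^sub>R z2)"
      by (metis diff_add_cancel norm_triangle_ineq add_diff_eq diff_diff_eq2)
    also have "z2 - (R / norm z2) *\<^sub>R z2 = (1 - R / norm z2) *\<^sub>R z2" by (simp add: algebra_simps)
    also have "norm ((1 - R / norm z2) *\<^sub>R z2) = norm z2 - R"
    proof -
      have q: "R / norm z2 \<le> 1" using 2 R by (simp add: divide_le_eq_1)
      have "norm ((1 - R / norm z2) *\<^sub>R z2) = \<bar>1 - R / norm z2\<bar> * norm z2" by (rule norm_scaleR)
      also have "\<dots> = (1 - R / norm z2) * norm z2" using q by simp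
      also have "\<dots> = norm z2 - R" proof -
        have nz: "norm z2 \<noteq> 0" using 2 R by linarith
        show ?thesis using nz by (simp add: field_simps)
      qed
      finally show ?thesis .
    qed
    also have "norm z2 - R \<le> norm (z1 - z2)" using 2 norm_triangle_ineq3[of z2 z1] by (simp add: norm_minus_commute)
    finally show ?thesis using 2 unfolding proj_def by simp
  next
    case 3
    have "norm ((R / norm z1) *\<^sub>R z1 - z2) \<le> norm (z1 - z2) + norm (z1 - (R / norm z1) *\<^sub>R z1)"
      by (metis norm_triangle_ineq norm_minus_commute diff_add_cancel add.commute diff_diff_eq2 add_diff_eq)
    also have "z1 - (R / norm z1) *\<^sub>R z1 = (1 - R / norm z1) *\<^sub>R z1" by (simp add: algebra_simps)
    also have "norm ((1 - R / norm z1) *\<^sub>R z1) = norm z1 - R"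
    proof -
      have q: "R / norm z1 \<le> 1" using 3 R by (simp add: divide_le_eq_1)
      have "norm ((1 - R / norm z1) *\<^sub>R z1) = \<bar>1 - R / norm z1\<bar> * norm z1" by (rule norm_scaleR)
      also have "\<dots> = (1 - R / norm z1) * norm z1" using q by simp
      also have "\<dots> = norm z1 - R" proof -
        have nz: "norm z1 \<noteq> 0" using 3 R by linarith
        show ?thesis using nz by (simp add: field_simps)
      qed
      finally show ?thesis .
    qed
    also have "norm z1 - R \<le> norm (z1 - z2)" using 3 norm_triangle_ineq3[of z1 z2] by simp
    finally show ?thesis using 3 unfolding proj_def by simp
  next
    case 4
    have ne: "z1 \<noteq> 0" "z2 \<noteq> 0" using 4 R by auto
    have "(R / norm z1) *\<^sub>R z1 - (R / norm z2) *\<^sub>R z2 = R *\<^sub>R ((1 / norm z1) *\<^sub>R z1 - (1 / norm z2) *\<^sub>R z2)"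
      by (simp add: algebra_simps)
    then have "norm ((R / norm z1) *\<^sub>R z1 - (R / norm z2) *\<^sub>R z2) = R * norm ((1 / norm z1) *\<^sub>R z1 - (1 / norm z2) *\<^sub>R z2)"
      using R by simp
    also have "\<dots> \<le> R * (2 * norm (z1 - z2) / norm z1)"
      by (rule mult_left_mono[OF unit_diff[OF ne]]) (use R in simp)
    also have "\<dots> \<le> 2 * norm (z1 - z2)"
    proof -
      have "R / norm z1 \<le> 1" using 4 R by (simp add: divide_le_eq_1)
      then have "(R / norm z1) * (2 * norm (z1 - z2)) \<le> 1 * (2 * norm (z1 - z2))"
        by (intro mult_right_mono) auto
      then show ?thesis by (simp add: field_simps)
    qed
    finally show ?thesis using 4 unfolding proj_def by simp
  qed
qed

lemma N_field_zero: "N_field m \<alpha> \<beta> 0 = 0"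
  unfolding N_field_def Let_def by (simp add: zero_prod_def)

lemma N_field_bound:
  assumes "m \<ge> 0" "norm z \<le> R"
  shows "norm (N_field m \<alpha> \<beta> z) \<le> Lc m \<alpha> \<beta> R * R"
proof -
  have "norm (N_field m \<alpha> \<beta> z - N_field m \<alpha> \<beta> 0) \<le> Lc m \<alpha> \<beta> R * norm (z - 0)"
    using N_field_lip[OF assms(1) assms(2), of 0 \<alpha> \<beta>] assms(2) by (simp add: order_trans[OF norm_ge_zero])
  also have "\<dots> \<le> Lc m \<alpha> \<beta> R * R"
    using mult_left_mono[OF _ Lc_nonneg[OF assms(1), of \<alpha> \<beta> R], of "norm z" R] assms by simp

  finally show ?thesis by (simp add: N_field_zero)
qed

lemma N_field_orth_scaled: "c > 0 \<Longrightarrow> z \<bullet> N_field m \<alpha> \<beta> (c *\<^sub>R z) = 0"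
  using N_field_orth[of "c *\<^sub>R z" m \<alpha> \<beta>] by simp


lemma integral_pow:
  assumes "0 \<le> t"
  shows "integral {0..t} (\<lambda>r. C * r^n) = C * t^(Suc n) / Suc n"
proof -
  have "((\<lambda>r. C * r^n) has_integral ((\<lambda>r. C * r^(Suc n) / Suc n) t - (\<lambda>r. C * r^(Suc n) / Suc n) 0)) {0..t}"
  proof (rule fundamental_theorem_of_calculus)
    fix x assume "x \<in> {0..t}"
    have "((\<lambda>r. C * r^(Suc n) / Suc n) has_real_derivative C * (Suc n * x^n) / Suc n) (at x within {0..t})"
      by (intro derivative_eq_intros) auto
    then show "((\<lambda>r. C * r^(Suc n) / Suc n) has_vector_derivative C * x^n) (at x within {0..t})"
      by (simp add: has_real_derivative_iff_has_vector_derivative[symmetric])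
  qed (use assms in auto)
  then have "((\<lambda>r. C * r^n) has_integral C * t^(Suc n) / Suc n) {0..t}" by simp
  then show ?thesis by (rule integral_unique)
qed

locale picard =
  fixes m \<alpha> \<beta> s :: real and p :: "complex \<times> complex"
  assumes m: "m \<ge> 0" and s: "s \<ge> 0"
begin

definition "R = norm p + 1"
definition "G z = N_field m \<alpha> \<beta> (proj R z)"
definition "L0 = Lc m \<alpha> \<beta> R"
definition "Lg = 2 * L0 + 1"
definition "clp t = max 0 (min s t)"

lemma R_pos: "R > 0" unfolding R_def by (simp add: add_nonneg_pos)
lemma L0_nonneg: "L0 \<ge> 0" unfolding L0_def using Lc_nonneg[OF m] .
lemma Lg_pos: "Lg > 0" unfolding Lg_def using L0_nonneg by simp

lemma G_lip: "norm (G z1 - G z2) \<le> Lg * norm (z1 - z2)"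
proof -
  have "norm (G z1 - G z2) \<le> L0 * norm (proj R z1 - proj R z2)"
    unfolding G_def L0_def by (rule N_field_lip[OF m]) (use proj_norm R_pos in auto)
  also have "\<dots> \<le> L0 * (2 * norm (z1 - z2))"
    by (rule mult_left_mono[OF proj_lip[OF R_pos] L0_nonneg])
  also have "\<dots> \<le> Lg * norm (z1 - z2)" unfolding Lg_def by (simp add: algebra_simps)
  finally show ?thesis .
qed

lemma G_bound: "norm (G z) \<le> L0 * R"
  unfolding G_def L0_def by (rule N_field_bound[OF m]) (use proj_norm R_pos in auto)

lemma G_orth: "z \<bullet> G z = 0"
proof (cases "norm z \<le> R")
  case True then show ?thesis unfolding G_def proj_def by (simp add: N_field_orth)
next
  case False
  then have "norm z > 0" using R_pos by linarith
  then have "R / norm z > 0" using R_pos by simp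
  then show ?thesis using False unfolding G_def proj_def by (simp add: N_field_orth_scaled)
qed

lemma G_cont: "continuous_on S G"
proof -
  have "Lg-lipschitz_on S G"
    by (rule lipschitz_onI) (use G_lip Lg_pos in \<open>auto simp: dist_norm\<close>)
  then show ?thesis by (rule lipschitz_on_continuous_on)
qed

lemma clp_in: "clp t \<in> {0..s}" unfolding clp_def using s by auto
lemma clp_id: "t \<in> {0..s} \<Longrightarrow> clp t = t" unfolding clp_def by auto
lemma clp_cont: "continuous_on S clp" unfolding clp_def by (intro continuous_intros)

definition "PF w t = p + integral {0..clp t} (\<lambda>r. G (w r))"

lemma PF_in:
  assumes w: "continuous_on UNIV w"
  shows "PF w \<in> bcontfun"
proof (rule bcontfun_normI)
  have gw: "continuous_on UNIV (\<lambda>r. G (w r))"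
    using continuous_on_compose2[OF G_cont w] by auto
  have "continuous_on {0..s} (\<lambda>x. integral {0..x} (\<lambda>r. G (w r)))"
    by (rule indefinite_integral_continuous_1) (rule integrable_continuous_real, rule continuous_on_subset[OF gw], auto)
  then have "continuous_on UNIV (\<lambda>t. integral {0..clp t} (\<lambda>r. G (w r)))"
    by (rule continuous_on_compose2[OF _ clp_cont]) (use clp_in in auto)
  then show "continuous_on UNIV (PF w)" unfolding PF_def by (intro continuous_intros)
next
  fix t
  have gw: "continuous_on UNIV (\<lambda>r. G (w r))"
    using continuous_on_compose2[OF G_cont w] by auto
  have "norm (integral {0..clp t} (\<lambda>r. G (w r))) \<le> integral {0..clp t} (\<lambda>r. L0 * R)"
    by (rule integral_norm_bound_integral) (auto intro: integrable_continuous_real continuous_on_subset[OF gw] simp: G_bound)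
  also have "\<dots> = clp t * (L0 * R)" using clp_in[of t] by simp
  also have "\<dots> \<le> s * (L0 * R)" using clp_in[of t] L0_nonneg R_pos by (intro mult_right_mono) auto
  finally show "norm (PF w t) \<le> norm p + s * (L0 * R)" unfolding PF_def
    using norm_triangle_ineq[of p "integral {0..clp t} (\<lambda>r. G (w r))"] by linarith
qed

definition "Pic w = Bcontfun (PF (apply_bcontfun w))"

lemma Pic_apply: "apply_bcontfun (Pic w) t = PF (apply_bcontfun w) t"
  unfolding Pic_def using PF_in[of "apply_bcontfun w"] by (simp add: Bcontfun_inverse)

lemma Pic_clp: "apply_bcontfun (Pic w) t = apply_bcontfun (Pic w) (clp t)"
  unfolding Pic_apply PF_def using clp_id[OF clp_in] by simp

lemma Pic_iter:
  "t \<in> {0..s} \<Longrightarrow> dist (apply_bcontfun ((Pic ^^ n) w1) t) (apply_bcontfun ((Pic ^^ n) w2) t) \<le> (Lg * t)^n / fact n * dist w1 w2"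
proof (induction n arbitrary: t)
  case 0
  then show ?case by (simp add: dist_bounded)
next
  case (Suc n)
  define x1 where "x1 = apply_bcontfun ((Pic ^^ n) w1)"
  define x2 where "x2 = apply_bcontfun ((Pic ^^ n) w2)"
  define D where "D = dist w1 w2"
  have t: "0 \<le> t" "t \<le> s" using Suc.prems by auto
  have c1: "continuous_on S (\<lambda>r. G (x1 r))" for S
    using continuous_on_compose2[OF G_cont, of S x1] unfolding x1_def by auto
  have c2: "continuous_on S (\<lambda>r. G (x2 r))" for S
    using continuous_on_compose2[OF G_cont, of S x2] unfolding x2_def by auto
  have "dist (apply_bcontfun ((Pic ^^ Suc n) w1) t) (apply_bcontfun ((Pic ^^ Suc n) w2) t)
      = norm (integral {0..t} (\<lambda>r. G (x1 r)) - integral {0..t} (\<lambda>r. G (x2 r)))"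
    using clp_id[OF Suc.prems] by (simp add: Pic_apply PF_def x1_def x2_def dist_norm)
  also have "\<dots> = norm (integral {0..t} (\<lambda>r. G (x1 r) - G (x2 r)))"
    by (subst integral_diff) (auto intro: integrable_continuous_real c1 c2)
  also have "\<dots> \<le> integral {0..t} (\<lambda>r. (Lg * (Lg^n / fact n * D)) * r^n)"
  proof (rule integral_norm_bound_integral)
    show "(\<lambda>r. G (x1 r) - G (x2 r)) integrable_on {0..t}"
      by (auto intro!: integrable_continuous_real continuous_intros c1 c2)
    show "(\<lambda>r. (Lg * (Lg^n / fact n * D)) * r^n) integrable_on {0..t}"
      by (auto intro!: integrable_continuous_real continuous_intros)
    fix r assume r: "r \<in> {0..t}"
    have "norm (G (x1 r) - G (x2 r)) \<le> Lg * dist (x1 r) (x2 r)" using G_lip by (simp add: dist_norm)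
    also have "\<dots> \<le> Lg * ((Lg * r)^n / fact n * D)"
      using Suc.IH[of r] r t Lg_pos unfolding x1_def x2_def D_def by (intro mult_left_mono) auto
    also have "\<dots> = (Lg * (Lg^n / fact n * D)) * r^n" by (simp add: power_mult_distrib)
    finally show "norm (G (x1 r) - G (x2 r)) \<le> (Lg * (Lg^n / fact n * D)) * r^n" .
  qed
  also have "\<dots> = (Lg * (Lg^n / fact n * D)) * t^(Suc n) / Suc n" using integral_pow[OF t(1)] .
  also have "\<dots> = (Lg * t)^(Suc n) / fact (Suc n) * D"
    by (simp add: power_mult_distrib field_simps)
  finally show ?case unfolding D_def .
qed

lemma Pic_iter_global:
  assumes "n \<ge> 1"
  shows "dist ((Pic ^^ n) w1) ((Pic ^^ n) w2) \<le> (Lg * s)^n / fact n * dist w1 w2"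
proof (rule dist_bound)
  fix t
  obtain k where n: "n = Suc k" using assms by (cases n) auto
  have e: "apply_bcontfun ((Pic ^^ n) w) t = apply_bcontfun ((Pic ^^ n) w) (clp t)" for w
    unfolding n by (simp add: Pic_clp[symmetric])
  have "dist (apply_bcontfun ((Pic ^^ n) w1) t) (apply_bcontfun ((Pic ^^ n) w2) t)
      \<le> (Lg * clp t)^n / fact n * dist w1 w2"
    unfolding e by (rule Pic_iter[OF clp_in])
  also have "\<dots> \<le> (Lg * s)^n / fact n * dist w1 w2"
    using clp_in[of t] Lg_pos
    by (intro mult_right_mono divide_right_mono power_mono mult_left_mono) auto
  finally show "dist (apply_bcontfun ((Pic ^^ n) w1) t) (apply_bcontfun ((Pic ^^ n) w2) t) \<le> (Lg * s)^n / fact n * dist w1 w2" .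
qed

lemma exists_fix: "\<exists>w. Pic w = w"
proof -
  have "summable (\<lambda>n. (Lg * s)^n /\<^sub>R fact n)" by (rule summable_exp_generic)
  then have "(\<lambda>n. (Lg * s)^n / fact n) \<longlonglongrightarrow> 0"
    using summable_LIMSEQ_zero by (simp add: divide_inverse mult.commute)
  then obtain N0 where N0: "\<And>n. n \<ge> N0 \<Longrightarrow> \<bar>(Lg * s)^n / fact n\<bar> < 1"
    using LIMSEQ_D[of _ 0 1] by fastforce
  define N where "N = Suc N0"
  define c where "c = (Lg * s)^N / fact N"
  have c: "0 \<le> c" "c < 1" using N0[of N] Lg_pos s unfolding c_def N_def by auto
  have "\<exists>!x. (Pic ^^ N) x = x"
    by (rule banach_fix_type[OF c]) (use Pic_iter_global[of N] in \<open>auto simp: N_def c_def\<close>)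
  then obtain x where x: "(Pic ^^ N) x = x" "\<And>y. (Pic ^^ N) y = y \<Longrightarrow> y = x" by auto
  have "(Pic ^^ N) (Pic x) = Pic x"
    by (metis funpow_swap1 x(1))
  then have "Pic x = x" using x(2) by blast
  then show ?thesis by blast
qed

lemma exists_G_sol: "\<exists>w. is_sol G s p w"
proof -
  obtain x where x: "Pic x = x" using exists_fix by blast
  define w where "w = apply_bcontfun x"
  have weq: "w t = p + integral {0..clp t} (\<lambda>r. G (w r))" for t
    using Pic_apply[of x t] unfolding x w_def PF_def by simp
  have gw: "continuous_on S (\<lambda>r. G (w r))" for S
    using continuous_on_compose2[OF G_cont, of S w] unfolding w_def by auto
  have "w 0 = p" using weq[of 0] clp_id[of 0] s by simp
  moreover have "(w has_vector_derivative G (w r)) (at r within {0..s})" if r: "r \<in> {0..s}" for r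
  proof (rule has_vector_derivative_transform[OF r])
    show "w t = p + integral {0..t} (\<lambda>r. G (w r))" if "t \<in> {0..s}" for t
      using weq[of t] clp_id[OF that] by simp
    show "((\<lambda>t. p + integral {0..t} (\<lambda>r. G (w r))) has_vector_derivative G (w r)) (at r within {0..s})"
      using integral_has_vector_derivative[OF gw r] by (auto intro!: derivative_eq_intros)
  qed
  ultimately show ?thesis unfolding is_sol_def by blast
qed

lemma exists_sol: "\<exists>w. is_sol (N_field m \<alpha> \<beta>) s p w"
proof -
  obtain w where w: "is_sol G s p w" using exists_G_sol by blast
  have n: "norm (w t) = norm p" if "t \<in> {0..s}" for t
    by (rule sol_cons[OF G_orth w that])
  have "G (w t) = N_field m \<alpha> \<beta> (w t)" if "t \<in> {0..s}" for t
    unfolding G_def proj_def using n[OF that] R_def by simp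
  then have "is_sol (N_field m \<alpha> \<beta>) s p w" using w unfolding is_sol_def by simp
  then show ?thesis by blast
qed

end


lemma sol_bound:
  assumes "is_sol (N_field m \<alpha> \<beta>) s p w" "t \<in> {0..s}"
  shows "norm (w t) = norm p"
  by (rule sol_cons[OF N_field_orth assms])

lemma N_flow_eq:
  assumes m: "m \<ge> 0" and s: "s \<ge> 0" and w: "is_sol (N_field m \<alpha> \<beta>) s p w"
  shows "N_flow m \<alpha> \<beta> s p = w s"
  unfolding N_flow_def
proof (rule the1_equality)
  show "\<exists>w'. w' 0 = p \<and> w' s = w s \<and> (\<forall>r\<in>{0..s}. (w' has_vector_derivative N_field m \<alpha> \<beta> (w' r)) (at r within {0..s}))"
    using w unfolding is_sol_def by blast
  show "\<exists>!q. \<exists>w'. w' 0 = p \<and> w' s = q \<and> (\<forall>r\<in>{0..s}. (w' has_vector_derivative N_field m \<alpha> \<beta> (w' r)) (at r within {0..s}))"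
  proof (rule ex1I)
    show "\<exists>w'. w' 0 = p \<and> w' s = w s \<and> (\<forall>r\<in>{0..s}. (w' has_vector_derivative N_field m \<alpha> \<beta> (w' r)) (at r within {0..s}))"
      using w unfolding is_sol_def by blast
    fix q assume "\<exists>w'. w' 0 = p \<and> w' s = q \<and> (\<forall>r\<in>{0..s}. (w' has_vector_derivative N_field m \<alpha> \<beta> (w' r)) (at r within {0..s}))"
    then obtain w' where w': "is_sol (N_field m \<alpha> \<beta>) s p w'" "w' s = q" unfolding is_sol_def by blast
    have "w' s = w s"
      by (rule sol_unique[OF w'(1) w s N_field_lip[OF m] Lc_nonneg[OF m]])
         (use sol_bound[OF w'(1)] sol_bound[OF w] s in auto)
    then show "q = w s" using w' by simp
  qed
qed

lemma N_flow_sol: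
  assumes m: "m \<ge> 0" and s: "s \<ge> 0"
  obtains w where "is_sol (N_field m \<alpha> \<beta>) s p w" "N_flow m \<alpha> \<beta> s p = w s"
proof -
  interpret picard m \<alpha> \<beta> s p by (rule picard.intro) (use m s in auto)
  obtain w where "is_sol (N_field m \<alpha> \<beta>) s p w" using exists_sol by blast
  then show ?thesis using that N_flow_eq[OF m s] by blast
qed

lemma N_flow_norm:
  assumes m: "m \<ge> 0" and s: "s \<ge> 0"
  shows "norm (N_flow m \<alpha> \<beta> s p) = norm p"
proof -
  obtain w where w: "is_sol (N_field m \<alpha> \<beta>) s p w" "N_flow m \<alpha> \<beta> s p = w s" using N_flow_sol[OF m s] .
  show ?thesis using sol_bound[OF w(1), of s] s w(2) by simp
qed

lemma sol_swap:
  assumes w: "is_sol (N_field m \<alpha> \<beta>) s p w"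
  shows "is_sol (N_field m \<alpha> \<beta>) s (snd p, fst p) (\<lambda>t. (snd (w t), fst (w t)))"
  unfolding is_sol_def
proof (intro conjI ballI)
  show "(snd (w 0), fst (w 0)) = (snd p, fst p)" using w unfolding is_sol_def by simp
  fix r assume r: "r \<in> {0..s}"
  have d: "(w has_vector_derivative N_field m \<alpha> \<beta> (w r)) (at r within {0..s})" using w r unfolding is_sol_def by auto
  have "((\<lambda>t. (snd (w t), fst (w t))) has_vector_derivative (snd (N_field m \<alpha> \<beta> (w r)), fst (N_field m \<alpha> \<beta> (w r)))) (at r within {0..s})"
    by (intro has_vector_derivative_Pair bounded_linear.has_vector_derivative[OF bounded_linear_snd d]
          bounded_linear.has_vector_derivative[OF bounded_linear_fst d])
  then show "((\<lambda>t. (snd (w t), fst (w t))) has_vector_derivative N_field m \<alpha> \<beta> (snd (w r), fst (w r))) (at r within {0..s})"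
    using N_field_swap[of m \<alpha> \<beta> "w r"] by simp
qed

lemma N_flow_swap:
  assumes m: "m \<ge> 0" and s: "s \<ge> 0"
  shows "N_flow m \<alpha> \<beta> s (snd p, fst p) = (snd (N_flow m \<alpha> \<beta> s p), fst (N_flow m \<alpha> \<beta> s p))"
proof -
  obtain w where w: "is_sol (N_field m \<alpha> \<beta>) s p w" "N_flow m \<alpha> \<beta> s p = w s" using N_flow_sol[OF m s] .
  show ?thesis using N_flow_eq[OF m s sol_swap[OF w(1)]] w(2) by simp
qed


definition Fu :: "real \<Rightarrow> real \<Rightarrow> real \<Rightarrow> complex \<Rightarrow> complex \<Rightarrow> complex" where
  "Fu m \<alpha> \<beta> u v = \<i> * of_real m * v + \<i> * of_real \<alpha> * u * of_real ((cmod v)^2) + 2 * \<i> * of_real \<beta> * (cnj u * v + u * cnj v) * v"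

lemma N_field_Fu: "fst (N_field m \<alpha> \<beta> z) = Fu m \<alpha> \<beta> (fst z) (snd z)" "snd (N_field m \<alpha> \<beta> z) = Fu m \<alpha> \<beta> (snd z) (fst z)"
  unfolding N_field_def Fu_def Let_def by (simp_all add: algebra_simps)

lemma q_bound: "cmod (cnj u * v + u * cnj v) \<le> 2 * cmod u * cmod v"
proof -
  have "cmod (cnj u * v + u * cnj v) \<le> cmod (cnj u * v) + cmod (u * cnj v)" by (rule norm_triangle_ineq)
  then show ?thesis by (simp add: norm_mult)
qed

lemma norm_beta_term:
  assumes "cmod q \<le> Q"
  shows "cmod (2 * \<i> * of_real \<beta> * q * v) \<le> 2 * \<bar>\<beta>\<bar> * Q * cmod v"
proof -
  have "cmod (2 * \<i> * of_real \<beta> * q * v) = (2 * \<bar>\<beta>\<bar>) * (cmod q * cmod v)" by (simp add: norm_mult)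
  also have "\<dots> \<le> (2 * \<bar>\<beta>\<bar>) * (Q * cmod v)"
    by (intro mult_left_mono mult_right_mono assms) auto
  finally show ?thesis by simp
qed

lemma norm_Fu: "cmod (Fu m \<alpha> \<beta> u v) \<le> \<bar>m\<bar> * cmod v + (\<bar>\<alpha>\<bar> + 4 * \<bar>\<beta>\<bar>) * cmod u * (cmod v)^2"
proof -
  have "cmod (Fu m \<alpha> \<beta> u v) \<le> cmod (\<i> * of_real m * v) + cmod (\<i> * of_real \<alpha> * u * of_real ((cmod v)^2)) + cmod (2 * \<i> * of_real \<beta> * (cnj u * v + u * cnj v) * v)"
    unfolding Fu_def by (rule order_trans[OF norm_triangle_ineq add_right_mono[OF norm_triangle_ineq]])
  also have "cmod (2 * \<i> * of_real \<beta> * (cnj u * v + u * cnj v) * v) \<le> 2 * \<bar>\<beta>\<bar> * (2 * cmod u * cmod v) * cmod v"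
    by (rule norm_beta_term[OF q_bound])
  finally show ?thesis by (simp add: norm_mult power2_eq_square algebra_simps)
qed

lemma inner_i_real: "v \<bullet> (\<i> * of_real c * v) = 0"
  by (simp add: inner_complex_def algebra_simps)

lemma inner_Fu: "v \<bullet> Fu m \<alpha> \<beta> v u \<le> \<bar>m\<bar> * cmod u * cmod v + 4 * \<bar>\<beta>\<bar> * (cmod u)^2 * (cmod v)^2"
proof -
  have e: "Fu m \<alpha> \<beta> v u = \<i> * of_real m * u + \<i> * of_real (\<alpha> * (cmod u)^2) * v + 2 * \<i> * of_real \<beta> * (cnj v * u + v * cnj u) * u"
    unfolding Fu_def by (simp add: algebra_simps)
  have eq: "v \<bullet> Fu m \<alpha> \<beta> v u = v \<bullet> (\<i> * of_real m * u) + v \<bullet> (\<i> * of_real (\<alpha> * (cmod u)^2) * v) + v \<bullet> (2 * \<i> * of_real \<beta> * (cnj v * u + v * cnj u) * u)"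
    unfolding e by (simp add: inner_add_right)
  have z: "v \<bullet> (\<i> * of_real (\<alpha> * (cmod u)^2) * v) = 0" by (rule inner_i_real)
  have h1: "v \<bullet> (\<i> * of_real m * u) \<le> \<bar>m\<bar> * cmod u * cmod v"
    using norm_cauchy_schwarz[of v "\<i> * of_real m * u"] by (simp add: norm_mult mult_ac)
  have "cmod (2 * \<i> * of_real \<beta> * (cnj v * u + v * cnj u) * u) \<le> 2 * \<bar>\<beta>\<bar> * (2 * cmod v * cmod u) * cmod u"
    by (rule norm_beta_term[OF q_bound])
  then have "cmod v * cmod (2 * \<i> * of_real \<beta> * (cnj v * u + v * cnj u) * u) \<le> cmod v * (2 * \<bar>\<beta>\<bar> * (2 * cmod v * cmod u) * cmod u)"
    by (rule mult_left_mono) simp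
  then have h2: "v \<bullet> (2 * \<i> * of_real \<beta> * (cnj v * u + v * cnj u) * u) \<le> 4 * \<bar>\<beta>\<bar> * (cmod u)^2 * (cmod v)^2"
    using norm_cauchy_schwarz[of v "2 * \<i> * of_real \<beta> * (cnj v * u + v * cnj u) * u"]
    by (simp add: power2_eq_square mult_ac)
  show ?thesis using eq z h1 h2 by linarith
qed

lemma amgm_tau: "0 < t \<Longrightarrow> 2 * x * y \<le> t * x^2 + y^2 / (t::real)"
proof -
  assume t: "0 < t"
  have "t * x^2 + y^2 / t - 2 * x * y = (t * x - y)^2 / t" using t by (simp add: field_simps power2_eq_square)
  also have "\<dots> \<ge> 0" using t by simp
  finally show ?thesis by simp
qed

lemma norm_pair_sq: "(norm (x, y))^2 = (cmod x)^2 + (cmod y)^2"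
  by (simp add: norm_Pair)

lemma snd_bound:
  assumes m: "m \<ge> 0" and tau: "0 < \<tau>" and w: "is_sol (N_field m \<alpha> \<beta>) \<tau> (a, b) w" and t: "t \<in> {0..\<tau>}"
    and M: "\<tau> * ((cmod a)^2 + (cmod b)^2) \<le> M"
  shows "(cmod (snd (w t)))^2 \<le> exp (m + 1 + 8 * \<bar>\<beta>\<bar> * M) * ((cmod b)^2 + \<tau>^2 * ((cmod a)^2 + (cmod b)^2))"
proof -
  define \<rho>2 where "\<rho>2 = (cmod a)^2 + (cmod b)^2"
  have nrm: "(cmod (fst (w r)))^2 + (cmod (snd (w r)))^2 = \<rho>2" if "r \<in> {0..\<tau>}" for r
  proof -
    have "norm (w r) = norm (a, b)" by (rule sol_bound[OF w that])
    then have "(norm (fst (w r), snd (w r)))^2 = (norm (a, b))^2" by simp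
    then show ?thesis unfolding norm_pair_sq \<rho>2_def .
  qed
  define f where "f r = snd (w r) \<bullet> snd (w r)" for r
  define f' where "f' r = 2 * (snd (w r) \<bullet> snd (N_field m \<alpha> \<beta> (w r)))" for r
  have fsq: "f r = (cmod (snd (w r)))^2" for r unfolding f_def by (simp add: power2_norm_eq_inner)
  have der: "(f has_real_derivative f' r) (at r within {0..\<tau>})" if r: "r \<in> {0..\<tau>}" for r
  proof -
    have d: "(w has_vector_derivative N_field m \<alpha> \<beta> (w r)) (at r within {0..\<tau>})" using w r unfolding is_sol_def by auto
    have dv: "((\<lambda>x. snd (w x)) has_vector_derivative snd (N_field m \<alpha> \<beta> (w r))) (at r within {0..\<tau>})"
      by (rule bounded_linear.has_vector_derivative[OF bounded_linear_snd d])
    have "(f has_vector_derivative (snd (w r) \<bullet> snd (N_field m \<alpha> \<beta> (w r)) + snd (N_field m \<alpha> \<beta> (w r)) \<bullet> snd (w r))) (at r within {0..\<tau>})"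
      unfolding f_def by (rule bounded_bilinear.has_vector_derivative[OF bounded_bilinear_inner dv dv])
    then show ?thesis unfolding f'_def by (simp add: inner_commute has_real_derivative_iff_has_vector_derivative)
  qed
  define L where "L = (m + 1) / \<tau> + 8 * \<bar>\<beta>\<bar> * \<rho>2"
  define c where "c = m * \<tau> * \<rho>2"
  have rho0: "\<rho>2 \<ge> 0" unfolding \<rho>2_def by simp
  have Lpos: "L > 0" unfolding L_def using tau m rho0 by (simp add: add_pos_nonneg)
  have le: "f' r \<le> L * f r + c" if r: "r \<in> {0..\<tau>}" for r
  proof -
    define u where "u = fst (w r)"
    define v where "v = snd (w r)"
    have nr: "(cmod u)^2 + (cmod v)^2 = \<rho>2" using nrm[OF r] unfolding u_def v_def .
    have "f' r = 2 * (v \<bullet> Fu m \<alpha> \<beta> v u)" unfolding f'_def u_def v_def N_field_Fu ..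
    also have "\<dots> \<le> 2 * (m * cmod u * cmod v + 4 * \<bar>\<beta>\<bar> * (cmod u)^2 * (cmod v)^2)"
      using inner_Fu[of v m \<alpha> \<beta> u] m by simp
    also have "\<dots> = m * (2 * cmod u * cmod v) + 8 * \<bar>\<beta>\<bar> * (cmod u)^2 * (cmod v)^2" by (simp add: algebra_simps)
    also have "m * (2 * cmod u * cmod v) \<le> m * (\<tau> * (cmod u)^2 + (cmod v)^2 / \<tau>)"
      by (rule mult_left_mono[OF amgm_tau[OF tau] m])
    also have "m * (\<tau> * (cmod u)^2 + (cmod v)^2 / \<tau>) \<le> m * (\<tau> * \<rho>2 + (cmod v)^2 / \<tau>)"
      using nr tau m by (intro mult_left_mono add_right_mono) (auto simp: mult_left_mono)
    also have "8 * \<bar>\<beta>\<bar> * (cmod u)^2 * (cmod v)^2 \<le> 8 * \<bar>\<beta>\<bar> * \<rho>2 * (cmod v)^2"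
      using nr by (intro mult_right_mono mult_left_mono) auto
    also have "m * (\<tau> * \<rho>2 + (cmod v)^2 / \<tau>) + 8 * \<bar>\<beta>\<bar> * \<rho>2 * (cmod v)^2 \<le> L * (cmod v)^2 + c"
    proof -
      have "m * ((cmod v)^2 / \<tau>) \<le> (m + 1) / \<tau> * (cmod v)^2"
        using tau by (simp add: field_simps mult_right_mono)
      then show ?thesis unfolding L_def c_def by (simp add: algebra_simps)
    qed
    finally show ?thesis unfolding fsq v_def by simp
  qed
  have g: "f t + c / L \<le> (f 0 + c / L) * exp (L * t)"
    by (rule gronwall[OF _ Lpos der le t]) (use tau in auto)
  have f0: "f 0 = (cmod b)^2" using w unfolding is_sol_def fsq by simp
  have cL: "c / L \<le> \<tau>^2 * \<rho>2"
  proof -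
    have c0: "c \<ge> 0" unfolding c_def using m tau rho0 by simp
    have "c / L \<le> c / ((m + 1) / \<tau>)"
      using c0 Lpos tau m rho0 unfolding L_def by (intro divide_left_mono) (auto intro!: mult_pos_pos)
    also have "\<dots> = m / (m + 1) * (\<tau>^2 * \<rho>2)" unfolding c_def using m tau by (simp add: field_simps power2_eq_square)
    also have "\<dots> \<le> 1 * (\<tau>^2 * \<rho>2)" using m rho0 by (intro mult_right_mono) auto
    finally show ?thesis by simp
  qed
  have eL: "exp (L * t) \<le> exp (m + 1 + 8 * \<bar>\<beta>\<bar> * M)"
  proof -
    have "L * t \<le> L * \<tau>" using t Lpos by (intro mult_left_mono) auto
    also have "\<dots> = m + 1 + 8 * \<bar>\<beta>\<bar> * (\<tau> * \<rho>2)" unfolding L_def using tau by (simp add: field_simps)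
    also have "\<dots> \<le> m + 1 + 8 * \<bar>\<beta>\<bar> * M" using M unfolding \<rho>2_def by (simp add: mult_left_mono)
    finally show ?thesis by simp
  qed
  have cL0: "c / L \<ge> 0" unfolding c_def using m tau rho0 Lpos by simp
  have "f t \<le> (f 0 + c / L) * exp (L * t)" using g cL0 by linarith
  also have "\<dots> \<le> ((cmod b)^2 + \<tau>^2 * \<rho>2) * exp (m + 1 + 8 * \<bar>\<beta>\<bar> * M)"
    unfolding f0 using cL eL rho0 by (intro mult_mono) (auto simp: cL0 intro!: add_nonneg_nonneg)
  finally show ?thesis unfolding fsq \<rho>2_def by (simp add: mult.commute)
qed

lemma fst_bound:
  assumes m: "m \<ge> 0" and tau: "0 < \<tau>" and w: "is_sol (N_field m \<alpha> \<beta>) \<tau> (a, b) w" and t: "t \<in> {0..\<tau>}"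
    and M: "\<tau> * ((cmod a)^2 + (cmod b)^2) \<le> M"
  shows "(cmod (fst (w t)))^2 \<le> exp (m + 1 + 8 * \<bar>\<beta>\<bar> * M) * ((cmod a)^2 + \<tau>^2 * ((cmod a)^2 + (cmod b)^2))"
  using snd_bound[OF m tau sol_swap[OF w] t] M by (simp add: add.commute)

lemma onorm_scaleR_id: "onorm (\<lambda>h::real. h *\<^sub>R (D::'a::real_normed_vector)) = norm D"
  using onorm_scaleR_left[OF bounded_linear_ident, of D] by (simp add: onorm_id)

lemma mv_fst:
  assumes w: "is_sol H \<tau> p w" and tau: "0 \<le> \<tau>" and B: "\<And>x. x \<in> {0..\<tau>} \<Longrightarrow> cmod (fst (H (w x))) \<le> B"
  shows "cmod (fst (w \<tau>) - fst p) \<le> B * \<tau>"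
proof -
  have "norm ((\<lambda>t. fst (w t)) \<tau> - (\<lambda>t. fst (w t)) 0) \<le> B * norm (\<tau> - 0)"
  proof (rule differentiable_bound[where f' = "\<lambda>x h. h *\<^sub>R fst (H (w x))"])
    show "convex {0..\<tau>}" by simp
    fix x assume x: "x \<in> {0..\<tau>}"
    have d: "(w has_vector_derivative H (w x)) (at x within {0..\<tau>})" using w x unfolding is_sol_def by auto
    show "((\<lambda>t. fst (w t)) has_derivative (\<lambda>h. h *\<^sub>R fst (H (w x)))) (at x within {0..\<tau>})"
      using bounded_linear.has_vector_derivative[OF bounded_linear_fst d] by (simp add: has_vector_derivative_def)
    show "onorm (\<lambda>h. h *\<^sub>R fst (H (w x))) \<le> B" using B[OF x] by (simp add: onorm_scaleR_id)
  qed (use tau in auto)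
  then show ?thesis using w tau unfolding is_sol_def by simp
qed

lemma poly_ineq:
  fixes A B r t M :: real
  assumes A: "0 \<le> A" and B: "0 \<le> B" and t0: "0 \<le> t" and t1: "t \<le> 1" and r: "r \<le> A + B" "A \<le> r" "B \<le> r"
    and M: "t * r^2 \<le> M"
  shows "t * (A + t * r) * (B + t * r)^2 \<le> 2 * t * A * B^2 + 4 * M * (t * A + t * B)"
proof -
  have r0: "0 \<le> r" using A r by linarith
  have M0: "0 \<le> M" using M t0 r0 by (meson order_trans mult_nonneg_nonneg zero_le_power2)
  have sq: "(B + t * r)^2 \<le> 2 * B^2 + 2 * t^2 * r^2"
  proof -
    have "0 \<le> (B - t * r)^2" by simp
    then show ?thesis by (simp add: power2_eq_square algebra_simps)
  qed
  have "t * (A + t * r) * (B + t * r)^2 \<le> t * (A + t * r) * (2 * B^2 + 2 * t^2 * r^2)"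
    using sq A t0 r0 by (intro mult_left_mono) auto
  also have "\<dots> = 2 * t * A * B^2 + 2 * (t * B) * (t * r * B) + 2 * (t * A) * (t * (t * r^2)) + 2 * (t * r) * (t^2 * (t * r^2))"
    by (simp add: power2_eq_square power3_eq_cube algebra_simps)
  also have "\<dots> \<le> 2 * t * A * B^2 + 2 * (t * B) * M + 2 * (t * A) * M + 2 * (t * r) * M"
  proof -
    have "(t * r) * B \<le> (t * r) * r" using B r t0 r0 by (intro mult_left_mono) auto
    then have "t * r * B \<le> t * r^2" by (simp add: power2_eq_square mult.assoc)
    then have i1: "(t * B) * (t * r * B) \<le> (t * B) * M" using M B t0 by (intro mult_left_mono) auto
    have "t * (t * r^2) \<le> 1 * M" using t1 t0 M M0 by (intro mult_mono) auto
    then have i2: "(t * A) * (t * (t * r^2)) \<le> (t * A) * M" using A t0 by (intro mult_left_mono) auto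
    have "t^2 * (t * r^2) \<le> 1 * M" using t1 t0 M M0 by (intro mult_mono) (auto simp: power_le_one)
    then have i3: "(t * r) * (t^2 * (t * r^2)) \<le> (t * r) * M" using r0 t0 by (intro mult_left_mono) auto
    show ?thesis using i1 i2 i3 by linarith
  qed
  also have "\<dots> \<le> 2 * t * A * B^2 + 4 * M * (t * A + t * B)"
  proof -
    have "t * r \<le> t * A + t * B" using r t0 by (simp add: distrib_left[symmetric] mult_left_mono)
    then have "(t * r) * M \<le> (t * A + t * B) * M" using M0 by (intro mult_right_mono) auto
    then show ?thesis by (simp add: algebra_simps)
  qed
  finally show ?thesis .
qed

definition Ec :: "real \<Rightarrow> real \<Rightarrow> real \<Rightarrow> real" where
  "Ec m \<beta> M = sqrt (exp (m + 1 + 8 * \<bar>\<beta>\<bar> * M))"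

definition Kc :: "real \<Rightarrow> real \<Rightarrow> real \<Rightarrow> real \<Rightarrow> real" where
  "Kc m \<alpha> \<beta> M = 2 * m * Ec m \<beta> M + (\<bar>\<alpha>\<bar> + 4 * \<bar>\<beta>\<bar>) * Ec m \<beta> M ^ 3 * (2 + 4 * M)"

lemma Ec_pos: "Ec m \<beta> M > 0" unfolding Ec_def by simp

lemma Kc_nonneg: "m \<ge> 0 \<Longrightarrow> M \<ge> 0 \<Longrightarrow> Kc m \<alpha> \<beta> M \<ge> 0"
  unfolding Kc_def using Ec_pos[of m \<beta> M] by (intro add_nonneg_nonneg mult_nonneg_nonneg) auto

lemma sqrt_bound:
  assumes "x^2 \<le> E * (A^2 + T^2)" "0 \<le> x" "0 \<le> A" "0 \<le> T" "0 \<le> E"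
  shows "x \<le> sqrt E * (A + T)"
proof -
  have "x = sqrt (x^2)" using assms by simp
  also have "\<dots> \<le> sqrt (E * (A^2 + T^2))" using assms(1) by (rule real_sqrt_le_mono)
  also have "\<dots> = sqrt E * sqrt (A^2 + T^2)" by (simp add: real_sqrt_mult)
  also have "\<dots> \<le> sqrt E * (A + T)" using assms by (intro mult_left_mono sqrt_sum_squares_le_sum) auto
  finally show ?thesis .
qed

lemma final_comb:
  fixes k1 k2 M P Q S :: real
  assumes "0 \<le> k1" "0 \<le> k2" "0 \<le> M" "0 \<le> P" "0 \<le> Q" "0 \<le> S"
  shows "k1 * (Q + 2 * S) + k2 * (2 * P + 4 * M * (Q + S)) \<le> (2 * k1 + k2 * (2 + 4 * M)) * (P + Q + S)"
proof -
  have "(2 * k1 + k2 * (2 + 4 * M)) * (P + Q + S) - (k1 * (Q + 2 * S) + k2 * (2 * P + 4 * M * (Q + S)))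
      = 2 * k1 * P + k1 * Q + k2 * (4 * M * P + 2 * Q + 2 * S)" by (simp add: algebra_simps)
  moreover have "0 \<le> 2 * k1 * P + k1 * Q + k2 * (4 * M * P + 2 * Q + 2 * S)"
    using assms by (intro add_nonneg_nonneg mult_nonneg_nonneg) auto
  ultimately show ?thesis by linarith
qed



lemma step_bound:
  assumes m: "m \<ge> 0" and tau: "0 < \<tau>" "\<tau> \<le> 1" and M: "\<tau> * ((cmod a)^2 + (cmod b)^2) \<le> M"
  shows "cmod (fst (N_flow m \<alpha> \<beta> \<tau> (a, b)) - a) \<le> Kc m \<alpha> \<beta> M * (\<tau> * cmod a * (cmod b)^2 + \<tau> * cmod a + \<tau> * cmod b)"
proof -
  obtain w where w: "is_sol (N_field m \<alpha> \<beta>) \<tau> (a, b) w" "N_flow m \<alpha> \<beta> \<tau> (a, b) = w \<tau>"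
    using N_flow_sol[OF m, of \<tau> \<alpha> \<beta> "(a, b)"] tau(1) by auto
  define r where "r = norm (a, b)"
  define A where "A = cmod a"
  define B where "B = cmod b"
  define e where "e = Ec m \<beta> M"
  define c where "c = \<bar>\<alpha>\<bar> + 4 * \<bar>\<beta>\<bar>"
  have rA: "r \<le> A + B" "A \<le> r" "B \<le> r" unfolding r_def A_def B_def
    using norm_Pair_le[of a b] norm_fst_le[of a b] norm_snd_le[of b a] by auto
  have r2: "r^2 = A^2 + B^2" unfolding r_def A_def B_def by (rule norm_pair_sq)
  have A0: "0 \<le> A" and B0: "0 \<le> B" and r0: "0 \<le> r" unfolding A_def B_def r_def by auto
  have M': "\<tau> * r^2 \<le> M" using M unfolding r2 A_def B_def .
  have "0 \<le> \<tau> * r^2" using tau by simp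
  then have M0: "0 \<le> M" using M' by linarith
  have e0: "0 < e" unfolding e_def by (rule Ec_pos)
  have c0: "0 \<le> c" unfolding c_def by simp
  have ub: "cmod (fst (w x)) \<le> e * (A + \<tau> * r)" if x: "x \<in> {0..\<tau>}" for x
  proof -
    have "(cmod (fst (w x)))^2 \<le> exp (m + 1 + 8 * \<bar>\<beta>\<bar> * M) * (A^2 + (\<tau> * r)^2)"
      using fst_bound[OF m tau(1) w(1) x M] r2 unfolding A_def B_def by (simp add: power_mult_distrib)
    then show ?thesis unfolding e_def Ec_def by (rule sqrt_bound) (use A0 r0 tau in auto)
  qed
  have vb: "cmod (snd (w x)) \<le> e * (B + \<tau> * r)" if x: "x \<in> {0..\<tau>}" for x
  proof -
    have "(cmod (snd (w x)))^2 \<le> exp (m + 1 + 8 * \<bar>\<beta>\<bar> * M) * (B^2 + (\<tau> * r)^2)"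
      using snd_bound[OF m tau(1) w(1) x M] r2 unfolding A_def B_def by (simp add: power_mult_distrib)
    then show ?thesis unfolding e_def Ec_def by (rule sqrt_bound) (use B0 r0 tau in auto)
  qed
  define Bd where "Bd = m * (e * (B + \<tau> * r)) + c * (e * (A + \<tau> * r)) * (e * (B + \<tau> * r))^2"
  have Fb: "cmod (fst (N_field m \<alpha> \<beta> (w x))) \<le> Bd" if x: "x \<in> {0..\<tau>}" for x
  proof -
    have "cmod (fst (N_field m \<alpha> \<beta> (w x))) \<le> \<bar>m\<bar> * cmod (snd (w x)) + c * cmod (fst (w x)) * (cmod (snd (w x)))^2"
      unfolding N_field_Fu c_def by (rule norm_Fu)
    also have "\<dots> \<le> m * (e * (B + \<tau> * r)) + c * (e * (A + \<tau> * r)) * (e * (B + \<tau> * r))^2"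
      using ub[OF x] vb[OF x] m c0 e0 A0 r0 tau
      by (intro add_mono mult_left_mono mult_mono power_mono) auto
    finally show ?thesis unfolding Bd_def .
  qed
  have "cmod (fst (w \<tau>) - fst (a, b)) \<le> Bd * \<tau>"
    by (rule mv_fst[OF w(1)]) (use tau Fb in auto)
  then have d: "cmod (fst (N_flow m \<alpha> \<beta> \<tau> (a, b)) - a) \<le> Bd * \<tau>" using w(2) by simp
  have "Bd * \<tau> = (m * e) * (\<tau> * B + \<tau> * (\<tau> * r)) + (c * e^3) * (\<tau> * (A + \<tau> * r) * (B + \<tau> * r)^2)"
    unfolding Bd_def by (simp add: power2_eq_square power3_eq_cube algebra_simps)
  also have "\<dots> \<le> (m * e) * (\<tau> * A + 2 * (\<tau> * B)) + (c * e^3) * (2 * (\<tau> * A * B^2) + 4 * M * (\<tau> * A + \<tau> * B))"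
  proof -
    have "\<tau> * (\<tau> * r) \<le> 1 * (\<tau> * r)" using tau r0 by (intro mult_right_mono) auto
    also have "\<dots> \<le> \<tau> * A + \<tau> * B" using rA tau by (simp add: distrib_left[symmetric] mult_left_mono)
    finally have h1: "\<tau> * B + \<tau> * (\<tau> * r) \<le> \<tau> * A + 2 * (\<tau> * B)" by linarith
    have h2: "\<tau> * (A + \<tau> * r) * (B + \<tau> * r)^2 \<le> 2 * (\<tau> * A * B^2) + 4 * M * (\<tau> * A + \<tau> * B)"
      using poly_ineq[OF A0 B0 _ tau(2) rA M'] tau by simp
    have k1: "0 \<le> m * e" using m e0 by simp
    have k2: "0 \<le> c * e^3" using c0 e0 by simp
    show ?thesis using mult_left_mono[OF h1 k1] mult_left_mono[OF h2 k2] by linarith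
  qed
  also have "\<dots> \<le> (2 * (m * e) + (c * e^3) * (2 + 4 * M)) * (\<tau> * A * B^2 + \<tau> * A + \<tau> * B)"
    by (rule final_comb) (use m e0 c0 M0 A0 B0 tau in auto)
  also have "\<dots> = Kc m \<alpha> \<beta> M * (\<tau> * cmod a * (cmod b)^2 + \<tau> * cmod a + \<tau> * cmod b)"
    unfolding Kc_def e_def c_def A_def B_def by (simp add: algebra_simps)
  finally show ?thesis using d by linarith
qed



lemma sum_shift_int: "(\<Sum>j\<in>{p..q}. f (j + c)) = (\<Sum>j\<in>{p+c..q+(c::int)}. f j)"
  by (rule sum.reindex_bij_witness[of _ "\<lambda>j. j - c" "\<lambda>j. j + c"]) auto

lemma sum_mono_int_interval:
  fixes f :: "int \<Rightarrow> real"
  assumes "\<And>j. f j \<ge> 0" "p' \<le> p" "q \<le> q'"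
  shows "(\<Sum>j\<in>{p..q}. f j) \<le> (\<Sum>j\<in>{p'..q'}. f j)"
  by (rule sum_mono2) (use assms in auto)

lemma norm_sq_split: "(norm z)^2 = (cmod (fst z))^2 + (cmod (snd z))^2"
  by (cases z) (simp add: norm_Pair)

locale lat =
  fixes \<Phi> :: "complex \<times> complex \<Rightarrow> complex \<times> complex" and \<tau> K M :: real
    and A B :: "nat \<Rightarrow> int \<Rightarrow> complex"
  assumes tau: "0 < \<tau>" and K0: "0 \<le> K"
    and phin: "\<And>p. norm (\<Phi> p) = norm p"
    and phisw: "\<And>p. \<Phi> (snd p, fst p) = (snd (\<Phi> p), fst (\<Phi> p))"
    and step: "\<And>a b. \<tau> * ((cmod a)^2 + (cmod b)^2) \<le> M \<Longrightarrow>
                  cmod (fst (\<Phi> (a, b)) - a) \<le> K * (\<tau> * cmod a * (cmod b)^2 + \<tau> * cmod a + \<tau> * cmod b)"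
    and recA: "\<And>n j. A (Suc n) j = fst (\<Phi> (A n (j - 1), B n (j + 1)))"
    and recB: "\<And>n j. B (Suc n) j = snd (\<Phi> (A n (j - 1), B n (j + 1)))"
    and W0: "\<And>p q. (\<Sum>j\<in>{p..q}. \<tau> * (cmod (A 0 j))^2 + \<tau> * (cmod (B 0 j))^2) \<le> M"
begin

definition "ma n j = \<tau> * (cmod (A n j))^2"
definition "mb n j = \<tau> * (cmod (B n j))^2"
definition "Wd n p q = (\<Sum>j\<in>{p..q}. ma n j + mb n j)"

lemma ma_nonneg: "ma n j \<ge> 0" unfolding ma_def using tau by simp
lemma mb_nonneg: "mb n j \<ge> 0" unfolding mb_def using tau by simp

lemma cons_cell: "ma (Suc n) j + mb (Suc n) j = ma n (j - 1) + mb n (j + 1)"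
proof -
  have "(norm (\<Phi> (A n (j - 1), B n (j + 1))))^2 = (norm (A n (j - 1), B n (j + 1)))^2" by (simp add: phin)
  then have "(cmod (A (Suc n) j))^2 + (cmod (B (Suc n) j))^2 = (cmod (A n (j - 1)))^2 + (cmod (B n (j + 1)))^2"
    unfolding recA recB by (simp add: norm_Pair norm_sq_split)
  then have "\<tau> * ((cmod (A (Suc n) j))^2 + (cmod (B (Suc n) j))^2) = \<tau> * ((cmod (A n (j - 1)))^2 + (cmod (B n (j + 1)))^2)"
    by simp
  then show ?thesis unfolding ma_def mb_def by (simp only: distrib_left)
qed

lemma Wd_split: "Wd n p q = (\<Sum>j\<in>{p..q}. ma n j) + (\<Sum>j\<in>{p..q}. mb n j)"
  unfolding Wd_def by (simp add: sum.distrib)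

lemma Wd_Suc: "Wd (Suc n) p q = (\<Sum>j\<in>{p-1..q-1}. ma n j) + (\<Sum>j\<in>{p+1..q+1}. mb n j)"
proof -
  have "Wd (Suc n) p q = (\<Sum>j\<in>{p..q}. ma n (j + (-1))) + (\<Sum>j\<in>{p..q}. mb n (j + 1))"
    unfolding Wd_def cons_cell by (simp add: sum.distrib)
  moreover have "(\<Sum>j\<in>{p..q}. ma n (j + (-1))) = (\<Sum>j\<in>{p+(-1)..q+(-1)}. ma n j)" by (rule sum_shift_int)
  moreover have "(\<Sum>j\<in>{p..q}. mb n (j + 1)) = (\<Sum>j\<in>{p+1..q+1}. mb n j)" by (rule sum_shift_int)
  ultimately show ?thesis by simp
qed

lemma Wd_dom: "Wd (Suc n) p q \<le> Wd n (p - 1) (q + 1)"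
proof -
  have "(\<Sum>j\<in>{p-1..q-1}. ma n j) \<le> (\<Sum>j\<in>{p-1..q+1}. ma n j)"
    by (rule sum_mono_int_interval) (auto simp: ma_nonneg)
  moreover have "(\<Sum>j\<in>{p+1..q+1}. mb n j) \<le> (\<Sum>j\<in>{p-1..q+1}. mb n j)"
    by (rule sum_mono_int_interval) (auto simp: mb_nonneg)
  moreover have "Wd (Suc n) p q = (\<Sum>j\<in>{p-1..q-1}. ma n j) + (\<Sum>j\<in>{p+1..q+1}. mb n j)" by (rule Wd_Suc)
  moreover have "Wd n (p - 1) (q + 1) = (\<Sum>j\<in>{p-1..q+1}. ma n j) + (\<Sum>j\<in>{p-1..q+1}. mb n j)" by (rule Wd_split)
  ultimately show ?thesis by linarith
qed

lemma Wd_bound: "Wd n p q \<le> M"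
proof (induction n arbitrary: p q)
  case 0 then show ?case using W0 unfolding Wd_def ma_def mb_def .
next
  case (Suc n) then show ?case using Wd_dom[of n p q] by (meson order_trans)
qed

lemma M0: "0 \<le> M"
proof -
  have "Wd 0 1 0 \<le> M" by (rule Wd_bound)
  then show ?thesis unfolding Wd_def by simp
qed

lemma Wd_nonneg: "0 \<le> Wd n p q" unfolding Wd_def by (intro sum_nonneg add_nonneg_nonneg ma_nonneg mb_nonneg)

lemma Wd_mono: "p' \<le> p \<Longrightarrow> q \<le> q' \<Longrightarrow> Wd n p q \<le> Wd n p' q'"
  unfolding Wd_def by (rule sum_mono_int_interval) (auto intro: add_nonneg_nonneg ma_nonneg mb_nonneg)

lemma pair_cell: "\<tau> * ((cmod (A n (j - 1)))^2 + (cmod (B n (j + 1)))^2) \<le> M"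
proof -
  have "ma n (j - 1) + mb n (j + 1) \<le> Wd n (j - 1) (j + 1)"
  proof -
    have "ma n (j - 1) \<le> ma n (j - 1) + mb n (j - 1)" using mb_nonneg by simp
    have "Wd n (j - 1) (j + 1) = (ma n (j - 1) + mb n (j - 1)) + (ma n j + mb n j) + (ma n (j + 1) + mb n (j + 1))"
    proof -
      have "{j - 1..j + 1} = {j - 1, j, j + 1}" by auto
      then show ?thesis unfolding Wd_def by (simp add: algebra_simps)
    qed
    then show ?thesis using ma_nonneg[of n "j - 1"] mb_nonneg[of n "j - 1"] ma_nonneg[of n j] mb_nonneg[of n j] ma_nonneg[of n "j + 1"] by linarith
  qed
  then show ?thesis using Wd_bound[of n "j - 1" "j + 1"] unfolding ma_def mb_def by (simp add: algebra_simps)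
qed

lemma flux_one:
  assumes "p + 1 \<le> q"
  shows "Wd (Suc n) (p + 1) (q - 1) + mb n p + mb n (p + 1) \<le> Wd n p q"
proof -
  have e1: "(\<Sum>j\<in>{p+1+1..q-1+1}. mb n j) + mb n p + mb n (p + 1) = (\<Sum>j\<in>{p..q}. mb n j)"
  proof -
    have "{p..q} = insert p (insert (p + 1) {p+2..q})" using assms by auto
    moreover have "{p+1+1..q-1+1} = {p+2..q}" by auto
    moreover have "p \<notin> {p+2..q}" "p + 1 \<notin> {p+2..q}" "p \<noteq> p + 1" by auto
    ultimately show ?thesis by (simp only: sum.insert finite_atLeastAtMost_int insert_iff) simp
  qed
  have e2: "(\<Sum>j\<in>{p+1-1..q-1-1}. ma n j) \<le> (\<Sum>j\<in>{p..q}. ma n j)"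
    by (rule sum_mono_int_interval) (auto simp: ma_nonneg)
  have "Wd (Suc n) (p + 1) (q - 1) = (\<Sum>j\<in>{p+1-1..q-1-1}. ma n j) + (\<Sum>j\<in>{p+1+1..q-1+1}. mb n j)" by (rule Wd_Suc)
  moreover have "Wd n p q = (\<Sum>j\<in>{p..q}. ma n j) + (\<Sum>j\<in>{p..q}. mb n j)" by (rule Wd_split)
  ultimately show ?thesis using e1 e2 by linarith
qed

lemma flux:
  "(\<Sum>i<k. mb (n + i) (p + int i)) + Wd (n + k) (p + int k) (p + int k - 1) \<le> Wd n p (p + 2 * int k - 1)"
proof (induction k arbitrary: n p)
  case 0 then show ?case by simp
next
  case (Suc k)
  have IH: "(\<Sum>i<k. mb (Suc n + i) (p + 1 + int i)) + Wd (Suc n + k) (p + 1 + int k) (p + 1 + int k - 1) \<le> Wd (Suc n) (p + 1) (p + 1 + 2 * int k - 1)"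
    by (rule Suc.IH)
  have one: "Wd (Suc n) (p + 1) (p + 2 * int (Suc k) - 1 - 1) + mb n p + mb n (p + 1) \<le> Wd n p (p + 2 * int (Suc k) - 1)"
    by (rule flux_one) simp
  have s: "(\<Sum>i<Suc k. mb (n + i) (p + int i)) = mb n p + (\<Sum>i<k. mb (Suc n + i) (p + 1 + int i))"
    by (subst sum.lessThan_Suc_shift) (simp add: algebra_simps)
  have e: "p + 1 + 2 * int k - 1 = p + 2 * int (Suc k) - 1 - 1" by simp
  have e2: "Suc n + k = n + Suc k" "p + 1 + int k = p + int (Suc k)" by simp_all
  have e3: "p + 1 + int k - 1 = p + int (Suc k) - 1" by simp
  show ?case using IH one s mb_nonneg[of n "p + 1"] unfolding e e2 e3 by linarith
qed

lemma flux_b: "(\<Sum>i<k. mb (n + i) (p + int i)) \<le> Wd n p (p + 2 * int k - 1)"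
  using flux[where k=k and n=n and p=p] Wd_nonneg[of "n + k" "p + int k" "p + int k - 1"] by linarith

end


lemma gron_disc:
  fixes x c d :: "nat \<Rightarrow> real"
  assumes rec: "\<And>i. x (Suc i) \<le> x i * (1 + c i) + d i" and c: "\<And>i. 0 \<le> c i" and d: "\<And>i. 0 \<le> d i"
    and x: "\<And>i. 0 \<le> x i"
  shows "x k \<le> exp (\<Sum>i<k. c i) * (x 0 + (\<Sum>i<k. d i))"
proof (induction k)
  case 0 then show ?case by simp
next
  case (Suc k)
  define C where "C = (\<Sum>i<k. c i)"
  define D where "D = (\<Sum>i<k. d i)"
  have D0: "0 \<le> D" unfolding D_def using d by (simp add: sum_nonneg)
  have eC: "1 \<le> exp C" unfolding C_def using c by (simp add: sum_nonneg)
  have "x (Suc k) \<le> x k * (1 + c k) + d k" by (rule rec)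
  also have "\<dots> \<le> (exp C * (x 0 + D)) * (1 + c k) + d k"
    using Suc.IH c[of k] unfolding C_def D_def by (intro add_right_mono mult_right_mono) auto
  also have "\<dots> \<le> (exp C * (x 0 + D)) * exp (c k) + exp C * exp (c k) * d k"
  proof -
    have "1 + c k \<le> exp (c k)" by (rule exp_ge_add_one_self)
    then have a: "(exp C * (x 0 + D)) * (1 + c k) \<le> (exp C * (x 0 + D)) * exp (c k)"
      using x[of 0] D0 by (intro mult_left_mono) auto
    have h: "1 \<le> exp (c k)" using c[of k] by simp
    have "1 * 1 \<le> exp C * exp (c k)" by (rule mult_mono[OF eC h]) auto
    then have "1 \<le> exp C * exp (c k)" by simp
    from mult_right_mono[OF this d[of k]] have b: "d k \<le> exp C * exp (c k) * d k" by simp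
    show ?thesis using a b by linarith
  qed
  also have "\<dots> = exp (\<Sum>i<Suc k. c i) * (x 0 + (\<Sum>i<Suc k. d i))"
    unfolding C_def D_def by (simp add: exp_add algebra_simps)
  finally show ?case .
qed

context lat begin

definition "pa n J i = A (n + i) (J + int i)"
definition "pb n J i = B (n + i) (J + int i + 2)"

lemma pa_Suc: "pa n J (Suc i) = fst (\<Phi> (pa n J i, pb n J i))"
proof -
  have "pa n J (Suc i) = A (Suc (n + i)) (J + int i + 1)" unfolding pa_def by (simp add: algebra_simps)
  also have "\<dots> = fst (\<Phi> (A (n + i) (J + int i + 1 - 1), B (n + i) (J + int i + 1 + 1)))" by (rule recA)
  finally show ?thesis unfolding pa_def pb_def by (simp add: algebra_simps)
qed

lemma pb_mass: "\<tau> * (cmod (pb n J l))^2 = mb (n + l) (J + 2 + int l)"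
  unfolding pb_def mb_def by (simp add: algebra_simps)

lemma pa_step: "cmod (pa n J (Suc i) - pa n J i) \<le> K * (\<tau> * cmod (pa n J i) * (cmod (pb n J i))^2 + \<tau> * cmod (pa n J i) + \<tau> * cmod (pb n J i))"
proof -
  have "\<tau> * ((cmod (A (n + i) (J + int i + 1 - 1)))^2 + (cmod (B (n + i) (J + int i + 1 + 1)))^2) \<le> M"
    by (rule pair_cell)
  then have "\<tau> * ((cmod (pa n J i))^2 + (cmod (pb n J i))^2) \<le> M" unfolding pa_def pb_def by (simp add: algebra_simps)
  from step[OF this] show ?thesis unfolding pa_Suc .
qed

lemma pa_rec: "cmod (pa n J (Suc i)) \<le> cmod (pa n J i) * (1 + K * (\<tau> * (cmod (pb n J i))^2 + \<tau>)) + K * (\<tau> * cmod (pb n J i))"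
proof -
  have "cmod (pa n J (Suc i)) \<le> cmod (pa n J i) + cmod (pa n J (Suc i) - pa n J i)"
    by (metis add.commute diff_add_cancel norm_triangle_ineq)
  also have "\<dots> \<le> cmod (pa n J i) + K * (\<tau> * cmod (pa n J i) * (cmod (pb n J i))^2 + \<tau> * cmod (pa n J i) + \<tau> * cmod (pb n J i))"
    using pa_step by simp
  also have "\<dots> = cmod (pa n J i) * (1 + K * (\<tau> * (cmod (pb n J i))^2 + \<tau>)) + K * (\<tau> * cmod (pb n J i))"
    by (simp add: algebra_simps)
  finally show ?thesis .
qed

lemma pa_bound0: "cmod (pa n J i) \<le> exp (\<Sum>l<i. K * (\<tau> * (cmod (pb n J l))^2 + \<tau>)) * (cmod (pa n J 0) + (\<Sum>l<i. K * (\<tau> * cmod (pb n J l))))"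
  by (rule gron_disc[where x="\<lambda>i. cmod (pa n J i)" and c="\<lambda>l. K * (\<tau> * (cmod (pb n J l))^2 + \<tau>)" and d="\<lambda>l. K * (\<tau> * cmod (pb n J l))", OF pa_rec])
     (use K0 tau in auto)

lemma Sq_bound: "(\<Sum>l<i. \<tau> * (cmod (pb n J l))^2) \<le> Wd n (J + 2) (J + 2 + 2 * int i - 1)"
  unfolding pb_mass by (rule flux_b)

definition "Sb n J k = (\<Sum>l<k. \<tau> * cmod (pb n J l))"
definition "Sq n J k = (\<Sum>l<k. \<tau> * (cmod (pb n J l))^2)"
definition "Gk k = exp (K * (M + real k * \<tau>))"

lemma Sb_nonneg: "0 \<le> Sb n J k" unfolding Sb_def using tau by (simp add: sum_nonneg)
lemma Sq_nonneg: "0 \<le> Sq n J k" unfolding Sq_def using tau by (simp add: sum_nonneg)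

lemma pa_bound:
  assumes "i \<le> k"
  shows "cmod (pa n J i) \<le> Gk k * (cmod (pa n J 0) + K * Sb n J k)"
proof -
  have s1: "(\<Sum>l<i. K * (\<tau> * (cmod (pb n J l))^2 + \<tau>)) = K * ((\<Sum>l<i. \<tau> * (cmod (pb n J l))^2) + real i * \<tau>)"
  proof -
    have "(\<Sum>l<i. K * (\<tau> * (cmod (pb n J l))^2 + \<tau>)) = K * (\<Sum>l<i. \<tau> * (cmod (pb n J l))^2 + \<tau>)"
      by (simp add: sum_distrib_left)
    also have "(\<Sum>l<i. \<tau> * (cmod (pb n J l))^2 + \<tau>) = (\<Sum>l<i. \<tau> * (cmod (pb n J l))^2) + real i * \<tau>"
      by (simp add: sum.distrib)
    finally show ?thesis .
  qed
  have "(\<Sum>l<i. \<tau> * (cmod (pb n J l))^2) \<le> M" using Sq_bound[where i=i and n=n and J=J] Wd_bound order_trans by blast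
  moreover have "real i * \<tau> \<le> real k * \<tau>" using assms tau by (simp add: mult_right_mono)
  ultimately have e: "exp (\<Sum>l<i. K * (\<tau> * (cmod (pb n J l))^2 + \<tau>)) \<le> Gk k"
    unfolding s1 Gk_def using K0 by (simp add: mult_left_mono)
  have s2: "(\<Sum>l<i. K * (\<tau> * cmod (pb n J l))) = K * (\<Sum>l<i. \<tau> * cmod (pb n J l))" by (simp add: sum_distrib_left)
  have "(\<Sum>l<i. \<tau> * cmod (pb n J l)) \<le> Sb n J k" unfolding Sb_def
    by (rule sum_mono2) (use assms tau in auto)
  then have s3: "cmod (pa n J 0) + (\<Sum>l<i. K * (\<tau> * cmod (pb n J l))) \<le> cmod (pa n J 0) + K * Sb n J k"
    unfolding s2 using K0 by (simp add: mult_left_mono)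
  have nn: "0 \<le> cmod (pa n J 0) + (\<Sum>l<i. K * (\<tau> * cmod (pb n J l)))" using K0 tau by (simp add: sum_nonneg)
  have G0: "0 \<le> Gk k" unfolding Gk_def by simp
  show ?thesis using pa_bound0[of n J i] mult_mono[OF e s3 G0 nn] by linarith
qed

lemma pa_diff:
  "cmod (pa n J k - pa n J 0) \<le> K * (Gk k * (cmod (pa n J 0) + K * Sb n J k)) * (Sq n J k + real k * \<tau>) + K * Sb n J k"
proof -
  define X where "X = Gk k * (cmod (pa n J 0) + K * Sb n J k)"
  have tele: "cmod (pa n J i - pa n J 0) \<le> (\<Sum>l<i. cmod (pa n J (Suc l) - pa n J l))" for i
  proof (induction i)
    case 0 then show ?case by simp
  next
    case (Suc i)
    have "cmod (pa n J (Suc i) - pa n J 0) \<le> cmod (pa n J (Suc i) - pa n J i) + cmod (pa n J i - pa n J 0)"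
      by (metis diff_add_cancel norm_triangle_ineq add_diff_eq)
    then show ?case using Suc.IH by simp
  qed
  have "(\<Sum>l<k. cmod (pa n J (Suc l) - pa n J l)) \<le> (\<Sum>l<k. K * (X * (\<tau> * (cmod (pb n J l))^2 + \<tau>)) + K * (\<tau> * cmod (pb n J l)))"
  proof (rule sum_mono)
    fix l assume l: "l \<in> {..<k}"
    have xl: "cmod (pa n J l) \<le> X" unfolding X_def by (rule pa_bound) (use l in auto)
    have "K * (\<tau> * cmod (pa n J l) * (cmod (pb n J l))^2 + \<tau> * cmod (pa n J l) + \<tau> * cmod (pb n J l))
        = K * (cmod (pa n J l) * (\<tau> * (cmod (pb n J l))^2 + \<tau>)) + K * (\<tau> * cmod (pb n J l))"
      by (simp add: algebra_simps)
    also have "\<dots> \<le> K * (X * (\<tau> * (cmod (pb n J l))^2 + \<tau>)) + K * (\<tau> * cmod (pb n J l))"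
      using xl K0 tau by (intro add_right_mono mult_left_mono mult_right_mono) auto
    finally show "cmod (pa n J (Suc l) - pa n J l) \<le> K * (X * (\<tau> * (cmod (pb n J l))^2 + \<tau>)) + K * (\<tau> * cmod (pb n J l))"
      using pa_step[of n J l] by linarith
  qed
  also have "\<dots> = K * X * (Sq n J k + real k * \<tau>) + K * Sb n J k"
    unfolding Sq_def Sb_def by (simp add: sum.distrib sum_distrib_left algebra_simps)
  finally show ?thesis using tele[of k] unfolding X_def by linarith
qed

end


lemma sq_sum_le: "(x + y)^2 \<le> 2 * x^2 + 2 * (y::real)^2"
proof -
  have "0 \<le> (x - y)^2" by simp
  then show ?thesis by (simp add: power2_eq_square algebra_simps)
qed

context lat begin

lemma Sb_sq: "(Sb n J k)^2 \<le> real k * \<tau> * (\<Sum>l<k. mb (n + l) (J + 2 + int l))"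
proof -
  have "(Sb n J k)^2 \<le> (\<Sum>l<k. (\<tau> * cmod (pb n J l))^2) * card {..<k}"
    unfolding Sb_def by (rule sum_squared_le_sum_of_squares)
  also have "(\<Sum>l<k. (\<tau> * cmod (pb n J l))^2) = \<tau> * (\<Sum>l<k. mb (n + l) (J + 2 + int l))"
    unfolding pb_mass[symmetric] by (simp add: sum_distrib_left power_mult_distrib power2_eq_square mult_ac)
  finally show ?thesis by (simp add: mult_ac)
qed

lemma delta_point:
  assumes mu: "Sq n J k \<le> \<mu>"
  shows "cmod (A (n + k) (J + int k) - A n J) \<le> (K * Gk k * (\<mu> + real k * \<tau>)) * cmod (A n J) + (K * K * Gk k * (\<mu> + real k * \<tau>) + K) * Sb n J k"
proof -
  have G0: "0 \<le> Gk k" unfolding Gk_def by simp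
  have "cmod (pa n J k - pa n J 0) \<le> K * (Gk k * (cmod (pa n J 0) + K * Sb n J k)) * (Sq n J k + real k * \<tau>) + K * Sb n J k"
    by (rule pa_diff)
  also have "\<dots> \<le> K * (Gk k * (cmod (pa n J 0) + K * Sb n J k)) * (\<mu> + real k * \<tau>) + K * Sb n J k"
    using mu K0 G0 Sb_nonneg[of n J k] by (intro add_right_mono mult_left_mono) (auto intro!: mult_nonneg_nonneg add_nonneg_nonneg)
  also have "\<dots> = (K * Gk k * (\<mu> + real k * \<tau>)) * cmod (pa n J 0) + (K * K * Gk k * (\<mu> + real k * \<tau>) + K) * Sb n J k"
    by (simp add: algebra_simps)
  finally show ?thesis unfolding pa_def by simp
qed

lemma final_est:
  assumes mu: "\<And>J. Wd n (J + 2) (J + 2 * int k + 1) \<le> \<mu>"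
  shows "(\<Sum>J\<in>{p..q}. \<tau> * (cmod (A (n + k) (J + int k) - A n J))^2)
      \<le> 2 * (K * Gk k * (\<mu> + real k * \<tau>))^2 * M + 2 * (K * K * Gk k * (\<mu> + real k * \<tau>) + K)^2 * ((real k * \<tau>)^2 * M)"
proof -
  define c1 where "c1 = K * Gk k * (\<mu> + real k * \<tau>)"
  define c2 where "c2 = K * K * Gk k * (\<mu> + real k * \<tau>) + K"
  have mu0: "0 \<le> \<mu>" using mu[of 0] Wd_nonneg[of n 2 "2 * int k + 1"] by simp
  have G0: "0 \<le> Gk k" unfolding Gk_def by simp
  have c10: "0 \<le> c1" unfolding c1_def using K0 G0 mu0 tau by simp
  have c20: "0 \<le> c2" unfolding c2_def using K0 G0 mu0 tau by simp
  have pt: "\<tau> * (cmod (A (n + k) (J + int k) - A n J))^2 \<le> 2 * c1^2 * ma n J + 2 * c2^2 * (\<tau> * (Sb n J k)^2)" for J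
  proof -
    have "Sq n J k \<le> \<mu>"
      using Sq_bound[where i=k and n=n and J=J] mu[of J] unfolding Sq_def by (simp add: algebra_simps)
    from delta_point[OF this] have d: "cmod (A (n + k) (J + int k) - A n J) \<le> c1 * cmod (A n J) + c2 * Sb n J k"
      unfolding c1_def c2_def .
    have "(cmod (A (n + k) (J + int k) - A n J))^2 \<le> (c1 * cmod (A n J) + c2 * Sb n J k)^2"
      by (rule power_mono[OF d]) simp
    also have "\<dots> \<le> 2 * (c1 * cmod (A n J))^2 + 2 * (c2 * Sb n J k)^2" by (rule sq_sum_le)
    finally have "\<tau> * (cmod (A (n + k) (J + int k) - A n J))^2 \<le> \<tau> * (2 * (c1 * cmod (A n J))^2 + 2 * (c2 * Sb n J k)^2)"
      using tau by (simp add: mult_left_mono)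
    also have "\<dots> = 2 * c1^2 * ma n J + 2 * c2^2 * (\<tau> * (Sb n J k)^2)"
      unfolding ma_def by (simp add: power_mult_distrib algebra_simps)
    finally show ?thesis .
  qed
  have s1: "(\<Sum>J\<in>{p..q}. ma n J) \<le> M"
  proof -
    have "(\<Sum>J\<in>{p..q}. ma n J) \<le> Wd n p q" unfolding Wd_def by (rule sum_mono) (simp add: mb_nonneg)
    then show ?thesis using Wd_bound[of n p q] by linarith
  qed
  have s2: "(\<Sum>J\<in>{p..q}. \<tau> * (Sb n J k)^2) \<le> (real k * \<tau>)^2 * M"
  proof -
    have "(\<Sum>J\<in>{p..q}. \<tau> * (Sb n J k)^2) \<le> (\<Sum>J\<in>{p..q}. \<tau> * (real k * \<tau> * (\<Sum>l<k. mb (n + l) (J + 2 + int l))))"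
      by (rule sum_mono) (use tau Sb_sq in \<open>simp add: mult_left_mono\<close>)
    also have "\<dots> = real k * \<tau> * \<tau> * (\<Sum>l<k. (\<Sum>J\<in>{p..q}. mb (n + l) (J + 2 + int l)))"
      by (simp add: sum_distrib_left sum.swap[of _ "{p..q}"] mult_ac)
    also have "\<dots> \<le> real k * \<tau> * \<tau> * (\<Sum>l<k. M)"
    proof -
      have "(\<Sum>J\<in>{p..q}. mb (n + l) (J + 2 + int l)) \<le> M" for l
      proof -
        have "(\<Sum>J\<in>{p..q}. mb (n + l) (J + (2 + int l))) = (\<Sum>J\<in>{p + (2 + int l)..q + (2 + int l)}. mb (n + l) J)"
          by (rule sum_shift_int)
        also have "\<dots> \<le> Wd (n + l) (p + (2 + int l)) (q + (2 + int l))" unfolding Wd_def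
          by (rule sum_mono) (simp add: ma_nonneg)
        also have "\<dots> \<le> M" by (rule Wd_bound)
        finally show ?thesis by (simp add: add.assoc)
      qed
      then show ?thesis using tau by (intro mult_left_mono sum_mono) auto
    qed
    also have "\<dots> = (real k * \<tau>)^2 * M" by (simp add: power2_eq_square)
    finally show ?thesis .
  qed
  have "(\<Sum>J\<in>{p..q}. \<tau> * (cmod (A (n + k) (J + int k) - A n J))^2) \<le> (\<Sum>J\<in>{p..q}. 2 * c1^2 * ma n J + 2 * c2^2 * (\<tau> * (Sb n J k)^2))"
    by (rule sum_mono) (rule pt)
  also have "\<dots> = 2 * c1^2 * (\<Sum>J\<in>{p..q}. ma n J) + 2 * c2^2 * (\<Sum>J\<in>{p..q}. \<tau> * (Sb n J k)^2)"
    by (simp add: sum.distrib sum_distrib_left)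
  also have "\<dots> \<le> 2 * c1^2 * M + 2 * c2^2 * ((real k * \<tau>)^2 * M)"
    using s1 s2 by (intro add_mono mult_left_mono) auto
  finally show ?thesis unfolding c1_def c2_def .
qed

end


lemma geom_id: "x * (\<Sum>i<n. (1 + x)^i) = (1 + x)^n - (1::real)"
  by (induction n) (simp_all add: algebra_simps)

lemma sum_neg_int: "(\<Sum>j\<in>{p..q}. f (- j)) = (\<Sum>j\<in>{-q..-p::int}. f j)"
  by (rule sum.reindex_bij_witness[of _ uminus uminus]) auto

context lat begin

definition "Ua n p L = (\<Sum>j\<in>{p..p+L-1}. ma n j)"
definition "Ub n p L = (\<Sum>j\<in>{p..p+L-1}. mb n j)"

lemma U_step:
  assumes hb: "\<And>i p. i < n \<Longrightarrow> Ub i p L \<le> g i" and ha: "\<And>p. Ua 0 p L \<le> \<eta>"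
  shows "Ua n p L \<le> 2 * (Gk n)^2 * (\<eta> + K^2 * (real n * \<tau>) * (\<Sum>i<n. \<tau> * g i))"
proof -
  define G where "G = Gk n"
  have pt: "ma n j \<le> 2 * G^2 * ma 0 (j - int n) + 2 * G^2 * K^2 * (real n * \<tau>) * (\<tau> * (\<Sum>l<n. mb l (j - int n + 2 + int l)))" for j
  proof -
    have e: "A n j = pa 0 (j - int n) n" unfolding pa_def by simp
    have b: "cmod (A n j) \<le> G * (cmod (A 0 (j - int n)) + K * Sb 0 (j - int n) n)"
      unfolding e G_def using pa_bound[of n n 0 "j - int n"] by (simp add: pa_def)
    have "(cmod (A n j))^2 \<le> (G * (cmod (A 0 (j - int n)) + K * Sb 0 (j - int n) n))^2"
      by (rule power_mono[OF b]) simp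
    also have "\<dots> = (G * cmod (A 0 (j - int n)) + G * K * Sb 0 (j - int n) n)^2" by (simp add: algebra_simps)
    also have "\<dots> \<le> 2 * (G * cmod (A 0 (j - int n)))^2 + 2 * (G * K * Sb 0 (j - int n) n)^2" by (rule sq_sum_le)
    also have "\<dots> = 2 * G^2 * (cmod (A 0 (j - int n)))^2 + 2 * G^2 * K^2 * (Sb 0 (j - int n) n)^2"
      by (simp add: power_mult_distrib)
    also have "\<dots> \<le> 2 * G^2 * (cmod (A 0 (j - int n)))^2 + 2 * G^2 * K^2 * (real n * \<tau> * (\<Sum>l<n. mb (0 + l) (j - int n + 2 + int l)))"
      using Sb_sq[of 0 "j - int n" n] by (intro add_left_mono mult_left_mono) auto
    finally have "\<tau> * (cmod (A n j))^2 \<le> \<tau> * (2 * G^2 * (cmod (A 0 (j - int n)))^2 + 2 * G^2 * K^2 * (real n * \<tau> * (\<Sum>l<n. mb l (j - int n + 2 + int l))))"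
      using tau by (simp add: mult_left_mono)
    then show ?thesis unfolding ma_def by (simp add: algebra_simps)
  qed
  have "Ua n p L \<le> (\<Sum>j\<in>{p..p+L-1}. 2 * G^2 * ma 0 (j - int n) + 2 * G^2 * K^2 * (real n * \<tau>) * (\<tau> * (\<Sum>l<n. mb l (j - int n + 2 + int l))))"
    unfolding Ua_def by (rule sum_mono) (rule pt)
  also have "\<dots> = 2 * G^2 * (\<Sum>j\<in>{p..p+L-1}. ma 0 (j + (- int n))) + 2 * G^2 * K^2 * (real n * \<tau>) * (\<tau> * (\<Sum>j\<in>{p..p+L-1}. (\<Sum>l<n. mb l (j + (- int n + 2 + int l)))))"
    by (simp add: sum.distrib sum_distrib_left algebra_simps)
  also have "(\<Sum>j\<in>{p..p+L-1}. (\<Sum>l<n. mb l (j + (- int n + 2 + int l)))) = (\<Sum>l<n. (\<Sum>j\<in>{p..p+L-1}. mb l (j + (- int n + 2 + int l))))"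
    by (rule sum.swap)
  also have "(\<Sum>j\<in>{p..p+L-1}. ma 0 (j + (- int n))) = Ua 0 (p - int n) L"
    unfolding sum_shift_int Ua_def by (simp add: algebra_simps)
  also have "(\<Sum>l<n. (\<Sum>j\<in>{p..p+L-1}. mb l (j + (- int n + 2 + int l)))) = (\<Sum>l<n. Ub l (p - int n + 2 + int l) L)"
    unfolding sum_shift_int Ub_def by (simp add: algebra_simps)
  also have "2 * G^2 * Ua 0 (p - int n) L + 2 * G^2 * K^2 * (real n * \<tau>) * (\<tau> * (\<Sum>l<n. Ub l (p - int n + 2 + int l) L))
      \<le> 2 * G^2 * \<eta> + 2 * G^2 * K^2 * (real n * \<tau>) * (\<tau> * (\<Sum>l<n. g l))"
  proof (intro add_mono mult_left_mono)
    show "Ua 0 (p - int n) L \<le> \<eta>" by (rule ha)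
    show "(\<Sum>l<n. Ub l (p - int n + 2 + int l) L) \<le> (\<Sum>l<n. g l)" by (rule sum_mono) (use hb in auto)
  qed (use tau in auto)
  also have "\<dots> = 2 * (Gk n)^2 * (\<eta> + K^2 * (real n * \<tau>) * (\<Sum>i<n. \<tau> * g i))"
  proof -
    have "(\<Sum>i<n. \<tau> * g i) = \<tau> * (\<Sum>i<n. g i)" by (simp add: sum_distrib_left)
    then show ?thesis unfolding G_def by (simp add: algebra_simps)
  qed
  finally show ?thesis .
qed

lemma lat_refl: "lat \<Phi> \<tau> K M (\<lambda>n j. B n (- j)) (\<lambda>n j. A n (- j))"
proof (unfold_locales)
  show "0 < \<tau>" by (rule tau)
  show "0 \<le> K" by (rule K0)
  show "norm (\<Phi> p) = norm p" for p by (rule phin)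
  show "\<Phi> (snd p, fst p) = (snd (\<Phi> p), fst (\<Phi> p))" for p by (rule phisw)
  show "\<tau> * ((cmod a)^2 + (cmod b)^2) \<le> M \<Longrightarrow> cmod (fst (\<Phi> (a, b)) - a) \<le> K * (\<tau> * cmod a * (cmod b)^2 + \<tau> * cmod a + \<tau> * cmod b)" for a b
    by (rule step)
  fix n :: nat and j :: int
  have e: "- (j - 1) = - j + 1" "- (j + 1) = - j - 1" by simp_all
  have s: "\<Phi> (B n (- (j - 1)), A n (- (j + 1))) = (snd (\<Phi> (A n (- j - 1), B n (- j + 1))), fst (\<Phi> (A n (- j - 1), B n (- j + 1))))"
    using phisw[of "(A n (- j - 1), B n (- j + 1))"] unfolding e by (simp only: fst_conv snd_conv)
  show "B (Suc n) (- j) = fst (\<Phi> (B n (- (j - 1)), A n (- (j + 1))))" unfolding s recB by (simp add: algebra_simps)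
  show "A (Suc n) (- j) = snd (\<Phi> (B n (- (j - 1)), A n (- (j + 1))))" unfolding s recA by (simp add: algebra_simps)
next
  fix p q :: int
  have "(\<Sum>j\<in>{p..q}. \<tau> * (cmod (B 0 (- j)))^2 + \<tau> * (cmod (A 0 (- j)))^2) = (\<Sum>j\<in>{-q..-p}. \<tau> * (cmod (B 0 j))^2 + \<tau> * (cmod (A 0 j))^2)"
    by (rule sum_neg_int[where f = "\<lambda>j. \<tau> * (cmod (B 0 j))^2 + \<tau> * (cmod (A 0 j))^2"])
  also have "\<dots> \<le> M" using W0[of "-q" "-p"] by (simp add: add.commute)
  finally show "(\<Sum>j\<in>{p..q}. \<tau> * (cmod (B 0 (- j)))^2 + \<tau> * (cmod (A 0 (- j)))^2) \<le> M" .
qed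

definition "GTT T = exp (K * (M + T))"

lemma Gk_GTT: "real n * \<tau> \<le> T \<Longrightarrow> Gk n \<le> GTT T"
  unfolding Gk_def GTT_def using K0 by (simp add: mult_left_mono)

lemma nonconc_g:
  assumes T: "0 \<le> T" and eta: "0 \<le> \<eta>" and ia: "\<And>p. Ua 0 p L \<le> \<eta>" and ib: "\<And>p. Ub 0 p L \<le> \<eta>"
    and n: "real n * \<tau> \<le> T"
  shows "Ua n p L \<le> 2 * (GTT T)^2 * \<eta> * (1 + 2 * (GTT T)^2 * K^2 * T * \<tau>)^n \<and> Ub n p L \<le> 2 * (GTT T)^2 * \<eta> * (1 + 2 * (GTT T)^2 * K^2 * T * \<tau>)^n"
  using n
proof (induction n arbitrary: p rule: less_induct)
  case (less n)
  interpret R: lat \<Phi> \<tau> K M "\<lambda>n j. B n (- j)" "\<lambda>n j. A n (- j)" by (rule lat_refl)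
  define C0 where "C0 = 2 * (GTT T)^2"
  define D where "D = C0 * K^2 * T"
  define g where "g i = C0 * \<eta> * (1 + D * \<tau>)^i" for i
  have C00: "0 \<le> C0" unfolding C0_def by simp
  have D0: "0 \<le> D" unfolding D_def using C00 T by simp
  have RUa: "R.Ua i (- (q + L - 1)) L = Ub i q L" for i q
  proof -
    have "R.Ua i (- (q + L - 1)) L = (\<Sum>j\<in>{- (q + L - 1)..- q}. mb i (- j))"
      unfolding R.Ua_def R.ma_def mb_def by (simp add: algebra_simps)
    also have "\<dots> = (\<Sum>j\<in>{q..q + L - 1}. mb i j)" unfolding sum_neg_int by simp
    finally show ?thesis unfolding Ub_def .
  qed
  have RUb: "R.Ub i (- (q + L - 1)) L = Ua i q L" for i q
  proof -
    have "R.Ub i (- (q + L - 1)) L = (\<Sum>j\<in>{- (q + L - 1)..- q}. ma i (- j))"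
      unfolding R.Ub_def R.mb_def ma_def by (simp add: algebra_simps)
    also have "\<dots> = (\<Sum>j\<in>{q..q + L - 1}. ma i j)" unfolding sum_neg_int by simp
    finally show ?thesis unfolding Ua_def .
  qed
  have allp: "\<And>q. P q" if "\<And>q. P (- (q + L - 1))" for P :: "int \<Rightarrow> bool"
  proof -
    fix q show "P q" using that[of "- q - L + 1"] by simp
  qed
  have IHa: "Ua i q L \<le> g i" and IHb: "Ub i q L \<le> g i" if "i < n" for i q
  proof -
    have "real i * \<tau> \<le> T" using that less.prems tau by (meson less_imp_le_nat mult_right_mono of_nat_le_iff order_trans less_imp_le)
    then show "Ua i q L \<le> g i" "Ub i q L \<le> g i" using less.IH[OF that] unfolding g_def C0_def D_def by auto
  qed
  have Gn: "(Gk n)^2 \<le> (GTT T)^2"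
    using Gk_GTT[OF less.prems] by (intro power_mono) (auto simp: Gk_def)
  have key: "2 * (Gk n)^2 * (\<eta> + K^2 * (real n * \<tau>) * (\<Sum>i<n. \<tau> * g i)) \<le> g n"
  proof -
    have sg: "0 \<le> (\<Sum>i<n. \<tau> * g i)" unfolding g_def using tau C00 eta D0 by (intro sum_nonneg) auto
    have "2 * (Gk n)^2 * (\<eta> + K^2 * (real n * \<tau>) * (\<Sum>i<n. \<tau> * g i)) \<le> C0 * (\<eta> + K^2 * T * (\<Sum>i<n. \<tau> * g i))"
      unfolding C0_def using Gn less.prems sg eta tau T
      by (intro mult_mono add_left_mono mult_right_mono) (auto intro!: add_nonneg_nonneg mult_nonneg_nonneg)
    also have "\<dots> = C0 * \<eta> + C0 * \<eta> * ((D * \<tau>) * (\<Sum>i<n. (1 + D * \<tau>)^i))"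
      unfolding g_def D_def by (simp add: sum_distrib_left algebra_simps)
    also have "\<dots> = g n" unfolding geom_id g_def by (simp add: algebra_simps)
    finally show ?thesis .
  qed
  have "Ua n p L \<le> g n"
    using U_step[of n L g \<eta> p] IHb ia key by (meson order_trans)
  moreover have "Ub n p L \<le> g n"
  proof -
    have "R.Ua n (- (p + L - 1)) L \<le> 2 * (R.Gk n)^2 * (\<eta> + K^2 * (real n * \<tau>) * (\<Sum>i<n. \<tau> * g i))"
    proof (rule R.U_step)
      fix i q assume "i < n"
      show "R.Ub i q L \<le> g i" using IHa[OF \<open>i < n\<close>, of "- q - L + 1"] RUb[of i "- q - L + 1"] by simp
    next
      fix q show "R.Ua 0 q L \<le> \<eta>" using ib[of "- q - L + 1"] RUa[of 0 "- q - L + 1"] by simp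
    qed
    moreover have "R.Gk n = Gk n" unfolding R.Gk_def Gk_def ..
    ultimately show ?thesis using RUa[of n p] key by simp
  qed
  ultimately show ?case unfolding g_def C0_def D_def by simp
qed

lemma nonconc:
  assumes T: "0 \<le> T" and eta: "0 \<le> \<eta>" and ia: "\<And>p. Ua 0 p L \<le> \<eta>" and ib: "\<And>p. Ub 0 p L \<le> \<eta>"
    and n: "real n * \<tau> \<le> T"
  shows "Wd n p (p + L - 1) \<le> 4 * (GTT T)^2 * \<eta> * exp (2 * (GTT T)^2 * K^2 * T * T)"
proof -
  define x where "x = 2 * (GTT T)^2 * K^2 * T * \<tau>"
  have x0: "0 \<le> x" unfolding x_def using T tau by simp
  have "(1 + x)^n \<le> (exp x)^n" using x0 by (intro power_mono) (auto simp: exp_ge_add_one_self)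
  also have "\<dots> = exp (real n * x)" by (simp add: exp_of_nat_mult)
  also have "\<dots> \<le> exp (2 * (GTT T)^2 * K^2 * T * T)"
  proof -
    have "real n * x = 2 * (GTT T)^2 * K^2 * T * (real n * \<tau>)" unfolding x_def by (simp add: algebra_simps)
    also have "\<dots> \<le> 2 * (GTT T)^2 * K^2 * T * T" using n T by (intro mult_left_mono) auto
    finally show ?thesis by simp
  qed
  finally have px: "(1 + x)^n \<le> exp (2 * (GTT T)^2 * K^2 * T * T)" .
  have c0: "0 \<le> 2 * (GTT T)^2 * \<eta>" using eta by simp
  have "Ua n p L \<le> 2 * (GTT T)^2 * \<eta> * exp (2 * (GTT T)^2 * K^2 * T * T)" "Ub n p L \<le> 2 * (GTT T)^2 * \<eta> * exp (2 * (GTT T)^2 * K^2 * T * T)"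
    using nonconc_g[OF T eta ia ib n, of p] mult_left_mono[OF px c0] unfolding x_def by auto
  then show ?thesis unfolding Wd_split Ua_def Ub_def by simp
qed

end


definition bnd :: "real \<Rightarrow> real \<Rightarrow> real \<Rightarrow> real \<Rightarrow> real \<Rightarrow> real" where
  "bnd K M T \<eta> x = (let G = exp (K * (M + T)); \<mu> = 4 * G^2 * \<eta> * exp (2 * G^2 * K^2 * T * T) in
     2 * (K * G * (\<mu> + x))^2 * M + 2 * (K * K * G * (\<mu> + x) + K)^2 * (x^2 * M))"

context lat begin

lemma disc_u:
  assumes T: "0 \<le> T" and eta: "0 \<le> \<eta>"
    and ia: "\<And>p. Ua 0 p (2 * int k) \<le> \<eta>" and ib: "\<And>p. Ub 0 p (2 * int k) \<le> \<eta>"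
    and n: "real n * \<tau> \<le> T" and k: "real k * \<tau> \<le> T"
  shows "(\<Sum>J\<in>{p..q}. \<tau> * (cmod (A (n + k) (J + int k) - A n J))^2) \<le> bnd K M T \<eta> (real k * \<tau>)"
proof -
  define G where "G = GTT T"
  define \<mu> where "\<mu> = 4 * G^2 * \<eta> * exp (2 * G^2 * K^2 * T * T)"
  have mu: "Wd n (J + 2) (J + 2 * int k + 1) \<le> \<mu>" for J
    using nonconc[OF T eta ia ib n, of "J + 2"] unfolding \<mu>_def G_def by (simp add: algebra_simps)
  have mu0: "0 \<le> \<mu>" unfolding \<mu>_def using eta by simp
  have G0: "0 \<le> Gk k" unfolding Gk_def by simp
  have GG: "Gk k \<le> G" unfolding G_def by (rule Gk_GTT[OF k])
  have x0: "0 \<le> real k * \<tau>" using tau by simp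
  have "(\<Sum>J\<in>{p..q}. \<tau> * (cmod (A (n + k) (J + int k) - A n J))^2)
      \<le> 2 * (K * Gk k * (\<mu> + real k * \<tau>))^2 * M + 2 * (K * K * Gk k * (\<mu> + real k * \<tau>) + K)^2 * ((real k * \<tau>)^2 * M)"
    by (rule final_est[OF mu])
  also have "\<dots> \<le> 2 * (K * G * (\<mu> + real k * \<tau>))^2 * M + 2 * (K * K * G * (\<mu> + real k * \<tau>) + K)^2 * ((real k * \<tau>)^2 * M)"
    using GG G0 K0 mu0 x0 M0
    by (intro add_mono mult_right_mono mult_left_mono power_mono add_right_mono) (auto intro!: mult_nonneg_nonneg add_nonneg_nonneg)
  also have "\<dots> = bnd K M T \<eta> (real k * \<tau>)"
    unfolding bnd_def Let_def G_def GTT_def \<mu>_def by simp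
  finally show ?thesis .
qed

lemma disc_v:
  assumes T: "0 \<le> T" and eta: "0 \<le> \<eta>"
    and ia: "\<And>p. Ua 0 p (2 * int k) \<le> \<eta>" and ib: "\<And>p. Ub 0 p (2 * int k) \<le> \<eta>"
    and n: "real n * \<tau> \<le> T" and k: "real k * \<tau> \<le> T"
  shows "(\<Sum>J\<in>{p..q}. \<tau> * (cmod (B (n + k) (J - int k) - B n J))^2) \<le> bnd K M T \<eta> (real k * \<tau>)"
proof -
  interpret R: lat \<Phi> \<tau> K M "\<lambda>n j. B n (- j)" "\<lambda>n j. A n (- j)" by (rule lat_refl)
  have RUa: "R.Ua 0 q L = Ub 0 (- q - L + 1) L" for q L
  proof -
    have "R.Ua 0 q L = (\<Sum>j\<in>{q..q + L - 1}. mb 0 (- j))"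
      unfolding R.Ua_def R.ma_def mb_def by simp
    also have "\<dots> = (\<Sum>j\<in>{- q - L + 1..- q - L + 1 + L - 1}. mb 0 j)" unfolding sum_neg_int by (simp add: algebra_simps)
    finally show ?thesis unfolding Ub_def .
  qed
  have RUb: "R.Ub 0 q L = Ua 0 (- q - L + 1) L" for q L
  proof -
    have "R.Ub 0 q L = (\<Sum>j\<in>{q..q + L - 1}. ma 0 (- j))"
      unfolding R.Ub_def R.mb_def ma_def by simp
    also have "\<dots> = (\<Sum>j\<in>{- q - L + 1..- q - L + 1 + L - 1}. ma 0 j)" unfolding sum_neg_int by (simp add: algebra_simps)
    finally show ?thesis unfolding Ua_def .
  qed
  have "(\<Sum>J\<in>{-q..-p}. \<tau> * (cmod (B (n + k) (- J - int k) - B n (- J)))^2) \<le> bnd K M T \<eta> (real k * \<tau>)"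
    using R.disc_u[OF T eta _ _ n k, of "-q" "-p"] ib ia unfolding RUa RUb by (simp add: algebra_simps)
  also have "(\<Sum>J\<in>{-q..-p}. \<tau> * (cmod (B (n + k) (- J - int k) - B n (- J)))^2) = (\<Sum>J\<in>{p..q}. \<tau> * (cmod (B (n + k) (J - int k) - B n J))^2)"
    using sum_neg_int[where f="\<lambda>J. \<tau> * (cmod (B (n + k) (- J - int k) - B n (- J)))^2" and p=p and q=q] by simp
  finally show ?thesis .
qed

end


lemma cell_iff:
  assumes tau: "0 < (\<tau>::real)"
  shows "x \<in> {c + of_int J * \<tau> ..< c + (of_int J + 1) * \<tau>} \<longleftrightarrow> \<lfloor>(x - c) / \<tau>\<rfloor> = J"
proof -
  have "x \<in> {c + of_int J * \<tau> ..< c + (of_int J + 1) * \<tau>} \<longleftrightarrow> of_int J \<le> (x - c) / \<tau> \<and> (x - c) / \<tau> < of_int J + 1"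
    using tau by (auto simp: pos_le_divide_eq pos_divide_less_eq algebra_simps)
  also have "\<dots> \<longleftrightarrow> \<lfloor>(x - c) / \<tau>\<rfloor> = J" by (simp add: floor_eq_iff)
  finally show ?thesis .
qed

lemma range_iff:
  assumes tau: "0 < (\<tau>::real)"
  shows "x \<in> {c + of_int p * \<tau> ..< c + (of_int q + 1) * \<tau>} \<longleftrightarrow> \<lfloor>(x - c) / \<tau>\<rfloor> \<in> {p..q}"
proof -
  have "x \<in> {c + of_int p * \<tau> ..< c + (of_int q + 1) * \<tau>} \<longleftrightarrow> of_int p \<le> (x - c) / \<tau> \<and> (x - c) / \<tau> < of_int q + 1"
    using tau by (auto simp: pos_le_divide_eq pos_divide_less_eq algebra_simps)
  also have "\<dots> \<longleftrightarrow> \<lfloor>(x - c) / \<tau>\<rfloor> \<in> {p..q}" by (auto simp: le_floor_iff floor_le_iff)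
  finally show ?thesis .
qed

lemma ind_cell:
  assumes tau: "0 < (\<tau>::real)"
  shows "(indicator {c + of_int J * \<tau> ..< c + (of_int J + 1) * \<tau>} x :: ennreal) = (if \<lfloor>(x - c) / \<tau>\<rfloor> = J then 1 else 0)"
  using cell_iff[OF tau, of x c J] by (simp add: indicator_def)

lemma ind_range:
  assumes tau: "0 < (\<tau>::real)"
  shows "(indicator {c + of_int p * \<tau> ..< c + (of_int q + 1) * \<tau>} x :: ennreal) = (if \<lfloor>(x - c) / \<tau>\<rfloor> \<in> {p..q} then 1 else 0)"
  using range_iff[OF tau, of x c p q] by (simp add: indicator_def)

lemma nn_integral_cells:
  fixes f :: "int \<Rightarrow> ennreal"
  assumes tau: "0 < \<tau>"
  shows "(\<integral>\<^sup>+ x. f \<lfloor>(x - c) / \<tau>\<rfloor> * indicator {c + of_int p * \<tau> ..< c + (of_int q + 1) * \<tau>} x \<partial>lborel)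
       = (\<Sum>J\<in>{p..q}. f J) * ennreal \<tau>"
proof -
  have pw: "f \<lfloor>(x - c) / \<tau>\<rfloor> * indicator {c + of_int p * \<tau> ..< c + (of_int q + 1) * \<tau>} x
      = (\<Sum>J\<in>{p..q}. f J * indicator {c + of_int J * \<tau> ..< c + (of_int J + 1) * \<tau>} x)" for x
  proof -
    have "(\<Sum>J\<in>{p..q}. f J * indicator {c + of_int J * \<tau> ..< c + (of_int J + 1) * \<tau>} x)
        = (\<Sum>J\<in>{p..q}. if J = \<lfloor>(x - c) / \<tau>\<rfloor> then f J else 0)"
      by (rule sum.cong) (simp_all only: ind_cell[OF tau], auto)
    also have "\<dots> = (if \<lfloor>(x - c) / \<tau>\<rfloor> \<in> {p..q} then f \<lfloor>(x - c) / \<tau>\<rfloor> else 0)"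
      by (simp add: sum.delta')
    finally show ?thesis by (simp only: ind_range[OF tau], auto)
  qed
  have "(\<integral>\<^sup>+ x. f \<lfloor>(x - c) / \<tau>\<rfloor> * indicator {c + of_int p * \<tau> ..< c + (of_int q + 1) * \<tau>} x \<partial>lborel)
      = (\<integral>\<^sup>+ x. (\<Sum>J\<in>{p..q}. f J * indicator {c + of_int J * \<tau> ..< c + (of_int J + 1) * \<tau>} x) \<partial>lborel)"
    unfolding pw ..
  also have "\<dots> = (\<Sum>J\<in>{p..q}. (\<integral>\<^sup>+ x. f J * indicator {c + of_int J * \<tau> ..< c + (of_int J + 1) * \<tau>} x \<partial>lborel))"
    by (rule nn_integral_sum) auto
  also have "\<dots> = (\<Sum>J\<in>{p..q}. f J * ennreal \<tau>)"
    using tau by (intro sum.cong refl) (simp add: nn_integral_cmult_indicator algebra_simps)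
  finally show ?thesis by (simp add: sum_distrib_right)
qed

lemma nn_integral_floor_bound:
  fixes f :: "int \<Rightarrow> ennreal"
  assumes tau: "0 < \<tau>" and S: "\<And>p q. (\<Sum>J\<in>{p..q}. f J) \<le> S"
  shows "(\<integral>\<^sup>+ x. f \<lfloor>(x - c) / \<tau>\<rfloor> \<partial>lborel) \<le> S * ennreal \<tau>"
proof -
  define g where "g N x = f \<lfloor>(x - c) / \<tau>\<rfloor> * indicator {c + of_int (- int N) * \<tau> ..< c + (of_int (int N) + 1) * \<tau>} x" for N x
  have inc: "incseq g"
  proof (rule incseq_SucI, rule le_funI)
    fix N x
    have "{c + of_int (- int N) * \<tau> ..< c + (of_int (int N) + 1) * \<tau>} \<subseteq> {c + of_int (- int (Suc N)) * \<tau> ..< c + (of_int (int (Suc N)) + 1) * \<tau>}"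
      using tau by (auto simp: algebra_simps)
    then show "g N x \<le> g (Suc N) x" unfolding g_def
      by (intro mult_left_mono) (auto simp: indicator_def)
  qed
  have lim: "(SUP N. g N x) = f \<lfloor>(x - c) / \<tau>\<rfloor>" for x
  proof -
    obtain N where N: "\<bar>\<lfloor>(x - c) / \<tau>\<rfloor>\<bar> \<le> int N" by (metis nat_int_comparison(3) abs_ge_zero int_nat_eq order_refl)
    have "g N' x = f \<lfloor>(x - c) / \<tau>\<rfloor>" if "N' \<ge> N" for N'
    proof -
      have "\<lfloor>(x - c) / \<tau>\<rfloor> \<in> {- int N'..int N'}" using N that by auto
      then show ?thesis unfolding g_def using range_iff[OF tau, of x c "- int N'" "int N'"] by simp
    qed
    moreover have "g N' x \<le> f \<lfloor>(x - c) / \<tau>\<rfloor>" for N'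
      unfolding g_def by (simp add: indicator_def)
    ultimately show ?thesis
      by (intro antisym SUP_least) (auto intro!: SUP_upper2[where i="N"] simp: )
  qed
  have meas: "g N \<in> borel_measurable lborel" for N
  proof -
    have geq: "g N = (\<lambda>x. (\<Sum>J\<in>{- int N..int N}. f J * indicator {c + of_int J * \<tau> ..< c + (of_int J + 1) * \<tau>} x))"
    proof
      fix x
      have "(\<Sum>J\<in>{- int N..int N}. f J * indicator {c + of_int J * \<tau> ..< c + (of_int J + 1) * \<tau>} x)
          = (\<Sum>J\<in>{- int N..int N}. if J = \<lfloor>(x - c) / \<tau>\<rfloor> then f J else 0)"
        by (rule sum.cong) (simp_all only: ind_cell[OF tau], auto)
      also have "\<dots> = (if \<lfloor>(x - c) / \<tau>\<rfloor> \<in> {- int N..int N} then f \<lfloor>(x - c) / \<tau>\<rfloor> else 0)"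
        by (simp add: sum.delta')
      finally show "g N x = (\<Sum>J\<in>{- int N..int N}. f J * indicator {c + of_int J * \<tau> ..< c + (of_int J + 1) * \<tau>} x)"
        unfolding g_def by (simp only: ind_range[OF tau], auto)
    qed
    show ?thesis unfolding geq by measurable
  qed
  have "(\<integral>\<^sup>+ x. f \<lfloor>(x - c) / \<tau>\<rfloor> \<partial>lborel) = (\<integral>\<^sup>+ x. (SUP N. g N x) \<partial>lborel)" unfolding lim ..
  also have "\<dots> = (SUP N. \<integral>\<^sup>+ x. g N x \<partial>lborel)"
    by (rule nn_integral_monotone_convergence_SUP[OF inc meas])
  also have "\<dots> \<le> S * ennreal \<tau>"
  proof (rule SUP_least)
    fix N
    have "(\<integral>\<^sup>+ x. g N x \<partial>lborel) = (\<Sum>J\<in>{- int N..int N}. f J) * ennreal \<tau>"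
      unfolding g_def by (rule nn_integral_cells[OF tau])
    also have "\<dots> \<le> S * ennreal \<tau>" by (intro mult_right_mono S) auto
    finally show "(\<integral>\<^sup>+ x. g N x \<partial>lborel) \<le> S * ennreal \<tau>" .
  qed
  finally show ?thesis .
qed


lemma ennreal_le_add_diff: "(a::ennreal) \<le> b + (a - b)"
  by (cases "a \<le> b") (auto simp: add_increasing2 add_diff_inverse_ennreal)

lemma abs_cont_nn:
  fixes f :: "real \<Rightarrow> ennreal"
  assumes fm: "f \<in> borel_measurable lborel" and fin: "(\<integral>\<^sup>+ x. f x \<partial>lborel) < \<infinity>" and e: "0 < e"
  shows "\<exists>\<delta>>0. \<forall>a b. b - a \<le> \<delta> \<longrightarrow> (\<integral>\<^sup>+ x. f x * indicator {a..b} x \<partial>lborel) < ennreal e"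
proof -
  define g where "g N x = f x - ennreal (real N)" for N x
  have gm: "g N \<in> borel_measurable lborel" for N unfolding g_def using fm by measurable
  have gdec: "AE x in lborel. g (Suc N) x \<le> g N x" for N
    unfolding g_def by (intro AE_I2 ennreal_minus_mono) auto
  have g0: "(\<integral>\<^sup>+ x. g 0 x \<partial>lborel) < \<infinity>" unfolding g_def using fin by simp
  have "AE x in lborel. f x \<noteq> \<infinity>" using nn_integral_noteq_infinite[OF fm] fin by auto
  then have ae0: "AE x in lborel. (INF N. g N x) = 0"
  proof (rule AE_mp, intro AE_I2 impI)
    fix x assume fx: "f x \<noteq> \<infinity>"
    then obtain r where r: "f x = ennreal r" "0 \<le> r" by (cases "f x") auto
    obtain N :: nat where N: "r \<le> real N" using real_arch_simple by blast
    have "g N x = 0" unfolding g_def r using N by (simp add: diff_eq_0_iff_ennreal ennreal_leI)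
    then show "(INF N. g N x) = 0" by (metis INF_lower UNIV_I le_zero_eq)
  qed
  have "(INF N. \<integral>\<^sup>+ x. g N x \<partial>lborel) = (\<integral>\<^sup>+ x. (INF N. g N x) \<partial>lborel)"
    by (rule nn_integral_monotone_convergence_INF_AE'[OF gdec gm g0, symmetric])
  also have "\<dots> = 0" using ae0 by (simp add: nn_integral_cong_AE)
  finally have inf0: "(INF N. \<integral>\<^sup>+ x. g N x \<partial>lborel) = 0" .
  have "\<exists>N. (\<integral>\<^sup>+ x. g N x \<partial>lborel) < ennreal (e / 2)"
  proof (rule ccontr)
    assume "\<not> ?thesis"
    then have "ennreal (e / 2) \<le> (INF N. \<integral>\<^sup>+ x. g N x \<partial>lborel)" by (auto intro: INF_greatest simp: not_less)
    then show False using inf0 e by simp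
  qed
  then obtain N where N: "(\<integral>\<^sup>+ x. g N x \<partial>lborel) < ennreal (e / 2)" by blast
  define \<delta> where "\<delta> = e / (2 * (real N + 1))"
  have dpos: "\<delta> > 0" unfolding \<delta>_def using e by simp
  have "(\<integral>\<^sup>+ x. f x * indicator {a..b} x \<partial>lborel) < ennreal e" if ab: "b - a \<le> \<delta>" for a b
  proof -
    have "(\<integral>\<^sup>+ x. f x * indicator {a..b} x \<partial>lborel) \<le> (\<integral>\<^sup>+ x. ennreal (real N) * indicator {a..b} x + g N x \<partial>lborel)"
    proof (rule nn_integral_mono)
      fix x
      have "f x \<le> ennreal (real N) + g N x" unfolding g_def by (rule ennreal_le_add_diff)
      then show "f x * indicator {a..b} x \<le> ennreal (real N) * indicator {a..b} x + g N x"
        by (cases "x \<in> {a..b}") auto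
    qed
    also have "\<dots> = ennreal (real N) * emeasure lborel {a..b} + (\<integral>\<^sup>+ x. g N x \<partial>lborel)"
    proof -
      have "g N \<in> borel_measurable borel" using gm by simp
      then show ?thesis by (subst nn_integral_add) (auto simp: nn_integral_cmult_indicator)
    qed
    also have "ennreal (real N) * emeasure lborel {a..b} \<le> ennreal (real N * \<delta>)"
    proof (cases "a \<le> b")
      case True
      then have "ennreal (real N) * emeasure lborel {a..b} = ennreal (real N * (b - a))" by (simp add: ennreal_mult)
      also have "\<dots> \<le> ennreal (real N * \<delta>)" using ab by (intro ennreal_leI mult_left_mono) auto
      finally show ?thesis .
    next
      case False then show ?thesis by simp
    qed
    finally have c1: "(\<integral>\<^sup>+ x. f x * indicator {a..b} x \<partial>lborel) \<le> ennreal (real N * \<delta>) + (\<integral>\<^sup>+ x. g N x \<partial>lborel)"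
      by (simp add: add_right_mono)
    have "real N * \<delta> < e / 2"
    proof -
      have "real N * \<delta> = e / 2 * (real N / (real N + 1))" unfolding \<delta>_def by (simp add: field_simps)
      also have "\<dots> < e / 2 * 1" using e by (intro mult_strict_left_mono) auto
      finally show ?thesis by simp
    qed
    moreover obtain y where y: "(\<integral>\<^sup>+ x. g N x \<partial>lborel) = ennreal y" "0 \<le> y"
      using N by (cases "(\<integral>\<^sup>+ x. g N x \<partial>lborel)") auto
    moreover have "y < e / 2" using N y e by (simp add: ennreal_less_iff)
    ultimately have "ennreal (real N * \<delta>) + (\<integral>\<^sup>+ x. g N x \<partial>lborel) < ennreal e"
      using dpos by (simp flip: ennreal_plus add: ennreal_less_iff)
    then show ?thesis using c1 by (rule order_le_less_trans[rotated])
  qed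
  then show ?thesis using dpos by blast
qed


lemma floor_shift: "0 < \<tau> \<Longrightarrow> \<lfloor>(x + of_int k * \<tau>) / \<tau>\<rfloor> = \<lfloor>x / (\<tau>::real)\<rfloor> + k"
proof -
  assume t: "0 < \<tau>"
  have "(x + of_int k * \<tau>) / \<tau> = x / \<tau> + of_int k" using t by (simp add: field_simps)
  then show ?thesis by simp
qed

lemma ts_grid_floor:
  assumes tau: "0 < \<tau>"
  shows "ts_grid m \<alpha> \<beta> \<tau> d n x = ts_grid m \<alpha> \<beta> \<tau> d n (of_int \<lfloor>x / \<tau>\<rfloor> * \<tau>)"
proof (induction n arbitrary: x)
  case 0
  have "\<lfloor>of_int \<lfloor>x / \<tau>\<rfloor> * \<tau> / \<tau>\<rfloor> = \<lfloor>x / \<tau>\<rfloor>" using tau by simp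
  then show ?case by simp
next
  case (Suc n)
  have e1: "\<lfloor>(x - \<tau>) / \<tau>\<rfloor> = \<lfloor>x / \<tau>\<rfloor> - 1" using floor_shift[OF tau, of x "-1"] by (simp add: algebra_simps)
  have e2: "\<lfloor>(x + \<tau>) / \<tau>\<rfloor> = \<lfloor>x / \<tau>\<rfloor> + 1" using floor_shift[OF tau, of x 1] by simp
  have e3: "\<lfloor>(of_int \<lfloor>x / \<tau>\<rfloor> * \<tau> - \<tau>) / \<tau>\<rfloor> = \<lfloor>x / \<tau>\<rfloor> - 1"
  proof -
    have "(of_int \<lfloor>x / \<tau>\<rfloor> * \<tau> - \<tau>) / \<tau> = of_int (\<lfloor>x / \<tau>\<rfloor> - 1)" using tau by (simp add: field_simps)
    then show ?thesis by (simp only: floor_of_int)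
  qed
  have e4: "\<lfloor>(of_int \<lfloor>x / \<tau>\<rfloor> * \<tau> + \<tau>) / \<tau>\<rfloor> = \<lfloor>x / \<tau>\<rfloor> + 1"
  proof -
    have "(of_int \<lfloor>x / \<tau>\<rfloor> * \<tau> + \<tau>) / \<tau> = of_int (\<lfloor>x / \<tau>\<rfloor> + 1)" using tau by (simp add: field_simps)
    then show ?thesis by (simp only: floor_of_int)
  qed
  show ?case
    by (simp only: ts_grid.simps, subst (1 2 3 4) Suc.IH) (simp only: e1 e2 e3 e4)
qed

definition "Gd m \<alpha> \<beta> \<tau> d n j = ts_grid m \<alpha> \<beta> \<tau> d n (of_int j * \<tau>)"

lemma ts_grid_G: "0 < \<tau> \<Longrightarrow> ts_grid m \<alpha> \<beta> \<tau> d n x = Gd m \<alpha> \<beta> \<tau> d n \<lfloor>x / \<tau>\<rfloor>"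
  unfolding Gd_def by (rule ts_grid_floor)

lemma Gd_Suc:
  assumes tau: "0 < \<tau>"
  shows "Gd m \<alpha> \<beta> \<tau> d (Suc n) j = N_flow m \<alpha> \<beta> \<tau> (fst (Gd m \<alpha> \<beta> \<tau> d n (j - 1)), snd (Gd m \<alpha> \<beta> \<tau> d n (j + 1)))"
proof -
  have a: "\<lfloor>(of_int j * \<tau> - \<tau>) / \<tau>\<rfloor> = j - 1"
  proof -
    have "(of_int j * \<tau> - \<tau>) / \<tau> = of_int (j - 1)" using tau by (simp add: field_simps)
    then show ?thesis by (simp only: floor_of_int)
  qed
  have b: "\<lfloor>(of_int j * \<tau> + \<tau>) / \<tau>\<rfloor> = j + 1"
  proof -
    have "(of_int j * \<tau> + \<tau>) / \<tau> = of_int (j + 1)" using tau by (simp add: field_simps)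
    then show ?thesis by (simp only: floor_of_int)
  qed
  show ?thesis unfolding Gd_def[of m \<alpha> \<beta> \<tau> d "Suc n"] ts_grid.simps
    by (simp only: ts_grid_G[OF tau] a b)
qed

lemma Gd_0: "0 < \<tau> \<Longrightarrow> Gd m \<alpha> \<beta> \<tau> d 0 j = d j"
  unfolding Gd_def by simp

lemma ts_u_G:
  assumes tau: "0 < \<tau>"
  shows "ts_u m \<alpha> \<beta> \<tau> d x t = fst (Gd m \<alpha> \<beta> \<tau> d (nat \<lfloor>t / \<tau>\<rfloor>) (\<lfloor>(x - t) / \<tau>\<rfloor> + int (nat \<lfloor>t / \<tau>\<rfloor>)))"
proof -
  have h: "\<lfloor>(x - (t - real n * \<tau>)) / \<tau>\<rfloor> = \<lfloor>(x - t) / \<tau>\<rfloor> + int n" for n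
  proof -
    have e: "x - (t - real n * \<tau>) = (x - t) + of_int (int n) * \<tau>" by simp
    show ?thesis unfolding e by (rule floor_shift[OF tau])
  qed
  show ?thesis unfolding ts_u_def Let_def ts_grid_G[OF tau] h ..
qed

lemma ts_v_G:
  assumes tau: "0 < \<tau>"
  shows "ts_v m \<alpha> \<beta> \<tau> d x t = snd (Gd m \<alpha> \<beta> \<tau> d (nat \<lfloor>t / \<tau>\<rfloor>) (\<lfloor>(x + t) / \<tau>\<rfloor> - int (nat \<lfloor>t / \<tau>\<rfloor>)))"
proof -
  have h: "\<lfloor>(x + (t - real n * \<tau>)) / \<tau>\<rfloor> = \<lfloor>(x + t) / \<tau>\<rfloor> - int n" for n
  proof -
    have e: "x + (t - real n * \<tau>) = (x + t) + of_int (- int n) * \<tau>" by simp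
    show ?thesis unfolding e floor_shift[OF tau] by simp
  qed
  show ?thesis unfolding ts_v_def Let_def ts_grid_G[OF tau] h ..
qed


lemma meas_floor_comp:
  fixes g :: "int \<Rightarrow> 'b::topological_space" and \<tau> :: real
  shows "(\<lambda>x. g \<lfloor>x / \<tau>\<rfloor>) \<in> borel_measurable borel"
proof -
  have "(\<lambda>x::real. x / \<tau>) \<in> borel_measurable borel" by measurable
  then have "(\<lambda>x::real. \<lfloor>x / \<tau>\<rfloor>) \<in> measurable borel (count_space UNIV)"
    using measurable_real_floor measurable_comp by (metis comp_def measurable_compose)
  then have "(\<lambda>x. (\<lambda>i x. g i) \<lfloor>x / \<tau>\<rfloor> x) \<in> borel_measurable borel"
    by (rule measurable_compose_countable'[rotated]) auto
  then show ?thesis by simp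
qed

lemma sq_tri: "(cmod a)^2 \<le> 2 * (cmod (a - b))^2 + 2 * (cmod b)^2"
proof -
  have "cmod a \<le> cmod (a - b) + cmod b" by (metis diff_add_cancel norm_triangle_ineq)
  then have "(cmod a)^2 \<le> (cmod (a - b) + cmod b)^2" by (intro power_mono) auto
  also have "\<dots> \<le> 2 * (cmod (a - b))^2 + 2 * (cmod b)^2" by (rule sq_sum_le)
  finally show ?thesis .
qed

lemma win_gen:
  fixes w :: "int \<Rightarrow> complex" and u0 :: "real \<Rightarrow> complex"
  assumes tau: "0 < \<tau>" and u0m: "u0 \<in> borel_measurable lborel"
  shows "ennreal (\<Sum>j\<in>{p..q}. \<tau> * (cmod (w j))^2)
     \<le> 2 * (\<integral>\<^sup>+ x. ennreal ((cmod (w \<lfloor>x / \<tau>\<rfloor> - u0 x))^2) \<partial>lborel)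
       + 2 * (\<integral>\<^sup>+ x. ennreal ((cmod (u0 x))^2) * indicator {of_int p * \<tau> .. (of_int q + 1) * \<tau>} x \<partial>lborel)"
proof -
  have wm: "(\<lambda>x. w \<lfloor>x / \<tau>\<rfloor>) \<in> borel_measurable borel" by (rule meas_floor_comp)
  have um: "u0 \<in> borel_measurable borel" using u0m by simp
  have "ennreal (\<Sum>j\<in>{p..q}. \<tau> * (cmod (w j))^2) = (\<Sum>j\<in>{p..q}. ennreal ((cmod (w j))^2)) * ennreal \<tau>"
    using tau by (simp add: sum_distrib_right[symmetric] ennreal_mult' mult.commute sum_distrib_left flip: sum_ennreal)
  also have "\<dots> = (\<integral>\<^sup>+ x. ennreal ((cmod (w \<lfloor>(x - 0) / \<tau>\<rfloor>))^2) * indicator {0 + of_int p * \<tau> ..< 0 + (of_int q + 1) * \<tau>} x \<partial>lborel)"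
    by (rule nn_integral_cells[OF tau, symmetric])
  also have "\<dots> \<le> (\<integral>\<^sup>+ x. 2 * ennreal ((cmod (w \<lfloor>x / \<tau>\<rfloor> - u0 x))^2) + 2 * (ennreal ((cmod (u0 x))^2) * indicator {of_int p * \<tau> .. (of_int q + 1) * \<tau>} x) \<partial>lborel)"
  proof (rule nn_integral_mono)
    fix x
    show "ennreal ((cmod (w \<lfloor>(x - 0) / \<tau>\<rfloor>))^2) * indicator {0 + of_int p * \<tau> ..< 0 + (of_int q + 1) * \<tau>} x
        \<le> 2 * ennreal ((cmod (w \<lfloor>x / \<tau>\<rfloor> - u0 x))^2) + 2 * (ennreal ((cmod (u0 x))^2) * indicator {of_int p * \<tau> .. (of_int q + 1) * \<tau>} x)"
    proof (cases "x \<in> {of_int p * \<tau> ..< (of_int q + 1) * \<tau>}")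
      case True
      then have "x \<in> {of_int p * \<tau> .. (of_int q + 1) * \<tau>}" by auto
      moreover have "ennreal ((cmod (w \<lfloor>x / \<tau>\<rfloor>))^2) \<le> ennreal (2 * (cmod (w \<lfloor>x / \<tau>\<rfloor> - u0 x))^2 + 2 * (cmod (u0 x))^2)"
        by (intro ennreal_leI sq_tri)
      ultimately show ?thesis using True by (simp add: ennreal_plus ennreal_mult')
    next
      case False then show ?thesis by simp
    qed
  qed
  also have "\<dots> = 2 * (\<integral>\<^sup>+ x. ennreal ((cmod (w \<lfloor>x / \<tau>\<rfloor> - u0 x))^2) \<partial>lborel)
       + 2 * (\<integral>\<^sup>+ x. ennreal ((cmod (u0 x))^2) * indicator {of_int p * \<tau> .. (of_int q + 1) * \<tau>} x \<partial>lborel)"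
    using wm um by (subst nn_integral_add) (auto simp: nn_integral_cmult)
  finally show ?thesis .
qed

lemma bnd_mono:
  assumes K: "0 \<le> K" and M: "0 \<le> M" and "0 \<le> \<eta>" "\<eta> \<le> \<delta>" "0 \<le> x" "x \<le> \<delta>"
  shows "bnd K M T \<eta> x \<le> bnd K M T \<delta> \<delta>"
proof -
  define G where "G = exp (K * (M + T))"
  define E where "E = exp (2 * G^2 * K^2 * T * T)"
  have G0: "0 \<le> G" and E0: "0 \<le> E" unfolding G_def E_def by auto
  have mu: "4 * G^2 * \<eta> * E \<le> 4 * G^2 * \<delta> * E" using assms G0 E0 by (intro mult_right_mono mult_left_mono) auto
  have mu0: "0 \<le> 4 * G^2 * \<eta> * E" using assms G0 E0 by simp
  have s: "4 * G^2 * \<eta> * E + x \<le> 4 * G^2 * \<delta> * E + \<delta>" using mu assms by linarith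
  have s0: "0 \<le> 4 * G^2 * \<eta> * E + x" using mu0 assms by linarith
  have t1: "(K * G * (4 * G^2 * \<eta> * E + x))^2 \<le> (K * G * (4 * G^2 * \<delta> * E + \<delta>))^2"
    using s s0 K G0 by (intro power_mono mult_left_mono) auto
  have t2: "(K * K * G * (4 * G^2 * \<eta> * E + x) + K)^2 \<le> (K * K * G * (4 * G^2 * \<delta> * E + \<delta>) + K)^2"
    using s s0 K G0 by (intro power_mono add_right_mono mult_left_mono) auto
  have t3: "x^2 * M \<le> \<delta>^2 * M" using assms by (intro mult_right_mono power_mono) auto
  have a1: "2 * (K * G * (4 * G^2 * \<eta> * E + x))^2 * M \<le> 2 * (K * G * (4 * G^2 * \<delta> * E + \<delta>))^2 * M"
    using t1 M by (intro mult_right_mono mult_left_mono) auto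
  have a2: "(K * K * G * (4 * G^2 * \<eta> * E + x) + K)^2 * (x^2 * M) \<le> (K * K * G * (4 * G^2 * \<delta> * E + \<delta>) + K)^2 * (\<delta>^2 * M)"
    by (rule mult_mono[OF t2 t3]) (use M in auto)
  show ?thesis unfolding bnd_def Let_def G_def[symmetric] E_def[symmetric]
    using a1 a2 by linarith
qed

lemma bnd_small:
  assumes K: "0 \<le> K" and M: "0 \<le> M" and e: "0 < \<epsilon>"
  shows "\<exists>\<delta>>0. \<forall>\<eta> x. 0 \<le> \<eta> \<longrightarrow> \<eta> \<le> \<delta> \<longrightarrow> 0 \<le> x \<longrightarrow> x \<le> \<delta> \<longrightarrow> bnd K M T \<eta> x < \<epsilon>"
proof -
  have "((\<lambda>\<delta>. bnd K M T \<delta> \<delta>) \<longlongrightarrow> bnd K M T 0 0) (at_right 0)"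
    unfolding bnd_def Let_def by (intro tendsto_intros)
  moreover have "bnd K M T 0 0 = 0" unfolding bnd_def Let_def by simp
  ultimately have "eventually (\<lambda>\<delta>. bnd K M T \<delta> \<delta> < \<epsilon>) (at_right 0)"
    using e by (auto dest: order_tendstoD(2))
  then obtain b where b: "b > 0" "\<And>y. y > 0 \<Longrightarrow> y < b \<Longrightarrow> bnd K M T y y < \<epsilon>"
    unfolding eventually_at_right_field by auto
  define \<delta> where "\<delta> = b / 2"
  have d: "\<delta> > 0" "\<delta> < b" unfolding \<delta>_def using b by auto
  show ?thesis
  proof (intro exI[of _ \<delta>] conjI allI impI)
    fix \<eta> x assume h: "0 \<le> \<eta>" "\<eta> \<le> \<delta>" "0 \<le> x" "x \<le> \<delta>"
    show "bnd K M T \<eta> x < \<epsilon>" using bnd_mono[OF K M h, of T] b(2)[OF d] by linarith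
  qed (use d in auto)
qed


lemma ennreal_2sum:
  assumes "a \<le> ennreal x" "b \<le> ennreal y" "0 \<le> x" "0 \<le> y"
  shows "2 * a + 2 * b \<le> ennreal (2 * x + 2 * y)"
proof -
  have "2 * a + 2 * b \<le> 2 * ennreal x + 2 * ennreal y" using assms by (intro add_mono mult_left_mono) auto
  also have "\<dots> = ennreal (2 * x + 2 * y)" using assms by (simp add: ennreal_plus ennreal_mult')
  finally show ?thesis .
qed

lemma ts_u_0: "0 < \<tau> \<Longrightarrow> ts_u m \<alpha> \<beta> \<tau> d x 0 = fst (d \<lfloor>x / \<tau>\<rfloor>)"
  by (simp add: ts_u_G Gd_0)

lemma ts_v_0: "0 < \<tau> \<Longrightarrow> ts_v m \<alpha> \<beta> \<tau> d x 0 = snd (d \<lfloor>x / \<tau>\<rfloor>)"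
  by (simp add: ts_v_G Gd_0)

lemma win_u:
  assumes tau: "0 < \<tau>" and u0m: "u0 \<in> borel_measurable lborel"
  shows "ennreal (\<Sum>j\<in>{p..q}. \<tau> * (cmod (fst (d j)))^2)
     \<le> 2 * (\<integral>\<^sup>+ x. ennreal ((cmod (ts_u m \<alpha> \<beta> \<tau> d x 0 - u0 x))^2) \<partial>lborel)
       + 2 * (\<integral>\<^sup>+ x. ennreal ((cmod (u0 x))^2) * indicator {of_int p * \<tau> .. (of_int q + 1) * \<tau>} x \<partial>lborel)"
  using win_gen[OF tau u0m, where w="\<lambda>j. fst (d j)" and p=p and q=q] by (simp add: ts_u_0[OF tau])

lemma win_v:
  assumes tau: "0 < \<tau>" and u0m: "u0 \<in> borel_measurable lborel"
  shows "ennreal (\<Sum>j\<in>{p..q}. \<tau> * (cmod (snd (d j)))^2)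
     \<le> 2 * (\<integral>\<^sup>+ x. ennreal ((cmod (ts_v m \<alpha> \<beta> \<tau> d x 0 - u0 x))^2) \<partial>lborel)
       + 2 * (\<integral>\<^sup>+ x. ennreal ((cmod (u0 x))^2) * indicator {of_int p * \<tau> .. (of_int q + 1) * \<tau>} x \<partial>lborel)"
  using win_gen[OF tau u0m, where w="\<lambda>j. snd (d j)" and p=p and q=q] by (simp add: ts_v_0[OF tau])

lemma ind_int_le: "(\<integral>\<^sup>+ x. f x * indicator S x \<partial>lborel) \<le> (\<integral>\<^sup>+ x. f x \<partial>lborel)" for f :: "real \<Rightarrow> ennreal"
  by (intro nn_integral_mono) (auto simp: indicator_def)


lemma nat_floor_facts:
  assumes tau: "0 < \<tau>" and s: "0 \<le> s"
  shows "real (nat \<lfloor>s / \<tau>\<rfloor>) * \<tau> \<le> s" "s < (real (nat \<lfloor>s / \<tau>\<rfloor>) + 1) * \<tau>"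
proof -
  have f0: "0 \<le> \<lfloor>s / \<tau>\<rfloor>" using tau s by simp
  then have e: "real (nat \<lfloor>s / \<tau>\<rfloor>) = of_int \<lfloor>s / \<tau>\<rfloor>" by simp
  have "of_int \<lfloor>s / \<tau>\<rfloor> \<le> s / \<tau>" by (rule of_int_floor_le)
  then have "of_int \<lfloor>s / \<tau>\<rfloor> * \<tau> \<le> s / \<tau> * \<tau>" using tau by (intro mult_right_mono) auto
  then show "real (nat \<lfloor>s / \<tau>\<rfloor>) * \<tau> \<le> s" unfolding e using tau by simp
  have "s / \<tau> < of_int \<lfloor>s / \<tau>\<rfloor> + 1" by (rule real_of_int_floor_add_one_gt)
  then have "s / \<tau> * \<tau> < (of_int \<lfloor>s / \<tau>\<rfloor> + 1) * \<tau>" using tau by (intro mult_strict_right_mono) auto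
  then show "s < (real (nat \<lfloor>s / \<tau>\<rfloor>) + 1) * \<tau>" unfolding e using tau by simp
qed

lemma int_bound_helper:
  fixes g :: "int \<Rightarrow> real"
  assumes tau: "0 < \<tau>" and g0: "\<And>J. 0 \<le> g J" and S: "\<And>p q. \<tau> * (\<Sum>J\<in>{p..q}. g J) \<le> B" and BE: "B < E"
  shows "(\<integral>\<^sup>+ x. ennreal (g \<lfloor>(x - c) / \<tau>\<rfloor>) \<partial>lborel) < ennreal E"
proof -
  have "(\<integral>\<^sup>+ x. ennreal (g \<lfloor>(x - c) / \<tau>\<rfloor>) \<partial>lborel) \<le> ennreal (B / \<tau>) * ennreal \<tau>"
  proof (rule nn_integral_floor_bound[OF tau])
    fix p q
    have "(\<Sum>J\<in>{p..q}. g J) \<le> B / \<tau>" using S[of p q] tau by (simp add: pos_le_divide_eq mult.commute)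
    then show "(\<Sum>J\<in>{p..q}. ennreal (g J)) \<le> ennreal (B / \<tau>)"
      using g0 by (simp add: sum_ennreal ennreal_leI sum_nonneg)
  qed
  also have "\<dots> = ennreal B"
  proof -
    have B0: "0 \<le> B" using S[of 1 0] by simp
    then show ?thesis using tau by (simp flip: ennreal_mult)
  qed
  also have "\<dots> < ennreal E"
  proof -
    have B0: "0 \<le> B" using S[of 1 0] by simp
    show ?thesis using BE B0 by (intro ennreal_lessI) auto
  qed
  finally show ?thesis .
qed

theorem lemma3p4:
  fixes m \<alpha> \<beta> T :: real
    and u0 v0 :: "real \<Rightarrow> complex"
    and d :: "real \<Rightarrow> int \<Rightarrow> complex \<times> complex"
  assumes m: "m \<ge> 0"
    and u0: "u0 \<in> borel_measurable lborel" "integrable lborel (\<lambda>x. (cmod (u0 x))^2)"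
    and v0: "v0 \<in> borel_measurable lborel" "integrable lborel (\<lambda>x. (cmod (v0 x))^2)"
    and d_l2: "\<And>\<tau>. \<tau> > 0 \<Longrightarrow>
        (\<lambda>j. (cmod (fst (d \<tau> j)))^2 + (cmod (snd (d \<tau> j)))^2) summable_on UNIV"
    and conv_u: "((\<lambda>\<tau>. \<integral>\<^sup>+ x. ennreal ((cmod (ts_u m \<alpha> \<beta> \<tau> (d \<tau>) x 0 - u0 x))^2) \<partial>lborel)
                    \<longlongrightarrow> 0) (at_right 0)"
    and conv_v: "((\<lambda>\<tau>. \<integral>\<^sup>+ x. ennreal ((cmod (ts_v m \<alpha> \<beta> \<tau> (d \<tau>) x 0 - v0 x))^2) \<partial>lborel)
                    \<longlongrightarrow> 0) (at_right 0)"
    and T: "T > 0"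
  shows "\<exists>\<tau>s. 0 < \<tau>s \<and> \<tau>s < 1 \<and> (\<exists>C1 > 0. \<forall>\<epsilon> > 0. \<exists>\<delta>1 > 0.
           \<forall>\<tau> h t0. 0 < \<tau> \<and> \<tau> < min \<delta>1 \<tau>s \<and> 0 < h \<and> h < \<delta>1 \<and> 0 \<le> t0 \<and> t0 + h \<le> T \<longrightarrow>
             (\<integral>\<^sup>+ x. ennreal ((cmod (ts_u m \<alpha> \<beta> \<tau> (d \<tau>) (x + h) (t0 + h)
                                    - ts_u m \<alpha> \<beta> \<tau> (d \<tau>) x t0))^2) \<partial>lborel)
               < ennreal (C1 * (\<epsilon> + \<tau>)) \<and>
             (\<integral>\<^sup>+ x. ennreal ((cmod (ts_v m \<alpha> \<beta> \<tau> (d \<tau>) (x - h) (t0 + h)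
                                    - ts_v m \<alpha> \<beta> \<tau> (d \<tau>) x t0))^2) \<partial>lborel)
               < ennreal (C1 * (\<epsilon> + \<tau>)))"
proof -
  define Nu where "Nu = (LINT x|lborel. (cmod (u0 x))^2)"
  define Nv where "Nv = (LINT x|lborel. (cmod (v0 x))^2)"
  have Iu: "(\<integral>\<^sup>+ x. ennreal ((cmod (u0 x))^2) \<partial>lborel) = ennreal Nu"
    unfolding Nu_def by (rule nn_integral_eq_integral[OF u0(2)]) simp
  have Iv: "(\<integral>\<^sup>+ x. ennreal ((cmod (v0 x))^2) \<partial>lborel) = ennreal Nv"
    unfolding Nv_def by (rule nn_integral_eq_integral[OF v0(2)]) simp
  have Nu0: "0 \<le> Nu" unfolding Nu_def by simp
  have Nv0: "0 \<le> Nv" unfolding Nv_def by simp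
  define eu where "eu \<tau> = (\<integral>\<^sup>+ x. ennreal ((cmod (ts_u m \<alpha> \<beta> \<tau> (d \<tau>) x 0 - u0 x))^2) \<partial>lborel)" for \<tau>
  define ev where "ev \<tau> = (\<integral>\<^sup>+ x. ennreal ((cmod (ts_v m \<alpha> \<beta> \<tau> (d \<tau>) x 0 - v0 x))^2) \<partial>lborel)" for \<tau>
  have ev_small: "\<exists>b>0. \<forall>\<tau>. 0 < \<tau> \<longrightarrow> \<tau> < b \<longrightarrow> eu \<tau> < ennreal c \<and> ev \<tau> < ennreal c" if c: "0 < c" for c
  proof -
    have "eventually (\<lambda>\<tau>. eu \<tau> < ennreal c) (at_right 0)"
      using order_tendstoD(2)[OF conv_u, of "ennreal c"] c unfolding eu_def by simp
    moreover have "eventually (\<lambda>\<tau>. ev \<tau> < ennreal c) (at_right 0)"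
      using order_tendstoD(2)[OF conv_v, of "ennreal c"] c unfolding ev_def by simp
    ultimately have "eventually (\<lambda>\<tau>. eu \<tau> < ennreal c \<and> ev \<tau> < ennreal c) (at_right 0)"
      by (rule eventually_conj)
    then show ?thesis unfolding eventually_at_right_field by auto
  qed
  obtain \<tau>1 where \<tau>1: "\<tau>1 > 0" "\<And>\<tau>. 0 < \<tau> \<Longrightarrow> \<tau> < \<tau>1 \<Longrightarrow> eu \<tau> < ennreal 1 \<and> ev \<tau> < ennreal 1"
    using ev_small[of 1] by auto
  define \<tau>s where "\<tau>s = min \<tau>1 1 / 2"
  have \<tau>s: "0 < \<tau>s" "\<tau>s < 1" "\<tau>s < \<tau>1" unfolding \<tau>s_def using \<tau>1 by auto
  define M where "M = 2 * (Nu + Nv) + 4"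
  have M0: "0 \<le> M" unfolding M_def using Nu0 Nv0 by simp
  define K where "K = Kc m \<alpha> \<beta> M"
  have K0: "0 \<le> K" unfolding K_def by (rule Kc_nonneg[OF m M0])
  have win: "(\<Sum>j\<in>{p..q}. \<tau> * (cmod (fst (d \<tau> j)))^2 + \<tau> * (cmod (snd (d \<tau> j)))^2) \<le> M"
    if t: "0 < \<tau>" "\<tau> < \<tau>1" for \<tau> p q
  proof -
    have a: "ennreal (\<Sum>j\<in>{p..q}. \<tau> * (cmod (fst (d \<tau> j)))^2) \<le> ennreal (2 * 1 + 2 * Nu)"
    proof -
      have "ennreal (\<Sum>j\<in>{p..q}. \<tau> * (cmod (fst (d \<tau> j)))^2) \<le> 2 * eu \<tau> + 2 * (\<integral>\<^sup>+ x. ennreal ((cmod (u0 x))^2) * indicator {of_int p * \<tau> .. (of_int q + 1) * \<tau>} x \<partial>lborel)"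
        unfolding eu_def by (rule win_u[OF t(1) u0(1)])
      also have "\<dots> \<le> ennreal (2 * 1 + 2 * Nu)"
      proof (rule ennreal_2sum)
        show "eu \<tau> \<le> ennreal 1" using \<tau>1(2)[OF t] by (auto intro: less_imp_le)
        show "(\<integral>\<^sup>+ x. ennreal ((cmod (u0 x))^2) * indicator {of_int p * \<tau> .. (of_int q + 1) * \<tau>} x \<partial>lborel) \<le> ennreal Nu"
          using ind_int_le[of "\<lambda>x. ennreal ((cmod (u0 x))^2)"] Iu by simp
      qed (use Nu0 in auto)
      finally show ?thesis .
    qed
    have b: "ennreal (\<Sum>j\<in>{p..q}. \<tau> * (cmod (snd (d \<tau> j)))^2) \<le> ennreal (2 * 1 + 2 * Nv)"
    proof -
      have "ennreal (\<Sum>j\<in>{p..q}. \<tau> * (cmod (snd (d \<tau> j)))^2) \<le> 2 * ev \<tau> + 2 * (\<integral>\<^sup>+ x. ennreal ((cmod (v0 x))^2) * indicator {of_int p * \<tau> .. (of_int q + 1) * \<tau>} x \<partial>lborel)"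
        unfolding ev_def by (rule win_v[OF t(1) v0(1)])
      also have "\<dots> \<le> ennreal (2 * 1 + 2 * Nv)"
      proof (rule ennreal_2sum)
        show "ev \<tau> \<le> ennreal 1" using \<tau>1(2)[OF t] by (auto intro: less_imp_le)
        show "(\<integral>\<^sup>+ x. ennreal ((cmod (v0 x))^2) * indicator {of_int p * \<tau> .. (of_int q + 1) * \<tau>} x \<partial>lborel) \<le> ennreal Nv"
          using ind_int_le[of "\<lambda>x. ennreal ((cmod (v0 x))^2)"] Iv by simp
      qed (use Nv0 in auto)
      finally show ?thesis .
    qed
    have "(\<Sum>j\<in>{p..q}. \<tau> * (cmod (fst (d \<tau> j)))^2) \<le> 2 * 1 + 2 * Nu" using a ennreal_le_iff[of "2 * 1 + 2 * Nu"] Nu0 by auto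
    moreover have "(\<Sum>j\<in>{p..q}. \<tau> * (cmod (snd (d \<tau> j)))^2) \<le> 2 * 1 + 2 * Nv" using b ennreal_le_iff[of "2 * 1 + 2 * Nv"] Nv0 by auto
    ultimately show ?thesis unfolding M_def by (simp add: sum.distrib)
  qed
  have latI: "lat (N_flow m \<alpha> \<beta> \<tau>) \<tau> K M (\<lambda>n j. fst (Gd m \<alpha> \<beta> \<tau> (d \<tau>) n j)) (\<lambda>n j. snd (Gd m \<alpha> \<beta> \<tau> (d \<tau>) n j))"
    if t: "0 < \<tau>" "\<tau> < \<tau>1" "\<tau> \<le> 1" for \<tau>
  proof (unfold_locales)
    show "0 < \<tau>" by (rule t(1))
    show "0 \<le> K" by (rule K0)
    show "norm (N_flow m \<alpha> \<beta> \<tau> p) = norm p" for p by (rule N_flow_norm[OF m]) (use t in auto)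
    show "N_flow m \<alpha> \<beta> \<tau> (snd p, fst p) = (snd (N_flow m \<alpha> \<beta> \<tau> p), fst (N_flow m \<alpha> \<beta> \<tau> p))" for p
      by (rule N_flow_swap[OF m]) (use t in auto)
    show "cmod (fst (N_flow m \<alpha> \<beta> \<tau> (a, b)) - a) \<le> K * (\<tau> * cmod a * (cmod b)^2 + \<tau> * cmod a + \<tau> * cmod b)"
      if "\<tau> * ((cmod a)^2 + (cmod b)^2) \<le> M" for a b
      unfolding K_def by (rule step_bound[OF m t(1) t(3) that])
    show "fst (Gd m \<alpha> \<beta> \<tau> (d \<tau>) (Suc n) j) = fst (N_flow m \<alpha> \<beta> \<tau> (fst (Gd m \<alpha> \<beta> \<tau> (d \<tau>) n (j - 1)), snd (Gd m \<alpha> \<beta> \<tau> (d \<tau>) n (j + 1))))"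
      for n j using Gd_Suc[OF t(1)] by simp
    show "snd (Gd m \<alpha> \<beta> \<tau> (d \<tau>) (Suc n) j) = snd (N_flow m \<alpha> \<beta> \<tau> (fst (Gd m \<alpha> \<beta> \<tau> (d \<tau>) n (j - 1)), snd (Gd m \<alpha> \<beta> \<tau> (d \<tau>) n (j + 1))))"
      for n j using Gd_Suc[OF t(1)] by simp
    show "(\<Sum>j\<in>{p..q}. \<tau> * (cmod (fst (Gd m \<alpha> \<beta> \<tau> (d \<tau>) 0 j)))^2 + \<tau> * (cmod (snd (Gd m \<alpha> \<beta> \<tau> (d \<tau>) 0 j)))^2) \<le> M" for p q
      using win[OF t(1) t(2), of p q] by (simp add: Gd_0[OF t(1)])
  qed
  show ?thesis
  proof (rule exI[of _ \<tau>s], intro conjI)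
    show "0 < \<tau>s" "\<tau>s < 1" using \<tau>s by auto
  next
    show "\<exists>C1>0. \<forall>\<epsilon>>0. \<exists>\<delta>1>0. \<forall>\<tau> h t0. 0 < \<tau> \<and> \<tau> < min \<delta>1 \<tau>s \<and> 0 < h \<and> h < \<delta>1 \<and> 0 \<le> t0 \<and> t0 + h \<le> T \<longrightarrow>
             (\<integral>\<^sup>+ x. ennreal ((cmod (ts_u m \<alpha> \<beta> \<tau> (d \<tau>) (x + h) (t0 + h)
                                    - ts_u m \<alpha> \<beta> \<tau> (d \<tau>) x t0))^2) \<partial>lborel)
               < ennreal (C1 * (\<epsilon> + \<tau>)) \<and>
             (\<integral>\<^sup>+ x. ennreal ((cmod (ts_v m \<alpha> \<beta> \<tau> (d \<tau>) (x - h) (t0 + h)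
                                    - ts_v m \<alpha> \<beta> \<tau> (d \<tau>) x t0))^2) \<partial>lborel)
               < ennreal (C1 * (\<epsilon> + \<tau>))"
  proof (rule exI[of _ "1::real"], intro conjI allI impI)
    show "(0::real) < 1" by simp
    fix \<epsilon> :: real assume eps: "0 < \<epsilon>"
    obtain \<delta>2 where \<delta>2: "\<delta>2 > 0" "\<And>\<eta> x. 0 \<le> \<eta> \<Longrightarrow> \<eta> \<le> \<delta>2 \<Longrightarrow> 0 \<le> x \<Longrightarrow> x \<le> \<delta>2 \<Longrightarrow> bnd K M T \<eta> x < \<epsilon>"
      using bnd_small[OF K0 M0 eps, of T] by blast
    have d8: "0 < \<delta>2 / 8" using \<delta>2 by simp
    have u0m: "(\<lambda>x. ennreal ((cmod (u0 x))^2)) \<in> borel_measurable lborel" using u0(1) by measurable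
    have v0m: "(\<lambda>x. ennreal ((cmod (v0 x))^2)) \<in> borel_measurable lborel" using v0(1) by measurable
    obtain \<delta>u where \<delta>u: "\<delta>u > 0" "\<And>a b. b - a \<le> \<delta>u \<Longrightarrow> (\<integral>\<^sup>+ x. ennreal ((cmod (u0 x))^2) * indicator {a..b} x \<partial>lborel) < ennreal (\<delta>2 / 8)"
      using abs_cont_nn[OF u0m _ d8] Iu by auto
    obtain \<delta>v where \<delta>v: "\<delta>v > 0" "\<And>a b. b - a \<le> \<delta>v \<Longrightarrow> (\<integral>\<^sup>+ x. ennreal ((cmod (v0 x))^2) * indicator {a..b} x \<partial>lborel) < ennreal (\<delta>2 / 8)"
      using abs_cont_nn[OF v0m _ d8] Iv by auto
    obtain \<tau>2 where \<tau>2: "\<tau>2 > 0" "\<And>\<tau>. 0 < \<tau> \<Longrightarrow> \<tau> < \<tau>2 \<Longrightarrow> eu \<tau> < ennreal (\<delta>2 / 8) \<and> ev \<tau> < ennreal (\<delta>2 / 8)"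
      using ev_small[OF d8] by auto
    define \<delta>1 where "\<delta>1 = min (min (\<delta>2 / 4) (min \<delta>u \<delta>v / 4)) \<tau>2"
    have \<delta>1: "0 < \<delta>1" "\<delta>1 \<le> \<delta>2 / 4" "4 * \<delta>1 \<le> \<delta>u" "4 * \<delta>1 \<le> \<delta>v" "\<delta>1 \<le> \<tau>2"
      unfolding \<delta>1_def using \<delta>2 \<delta>u \<delta>v \<tau>2 by auto
    show "\<exists>\<delta>1>0. \<forall>\<tau> h t0. 0 < \<tau> \<and> \<tau> < min \<delta>1 \<tau>s \<and> 0 < h \<and> h < \<delta>1 \<and> 0 \<le> t0 \<and> t0 + h \<le> T \<longrightarrow>
             (\<integral>\<^sup>+ x. ennreal ((cmod (ts_u m \<alpha> \<beta> \<tau> (d \<tau>) (x + h) (t0 + h)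
                                    - ts_u m \<alpha> \<beta> \<tau> (d \<tau>) x t0))^2) \<partial>lborel)
               < ennreal (1 * (\<epsilon> + \<tau>)) \<and>
             (\<integral>\<^sup>+ x. ennreal ((cmod (ts_v m \<alpha> \<beta> \<tau> (d \<tau>) (x - h) (t0 + h)
                                    - ts_v m \<alpha> \<beta> \<tau> (d \<tau>) x t0))^2) \<partial>lborel)
               < ennreal (1 * (\<epsilon> + \<tau>))"
    proof (rule exI[of _ \<delta>1], intro conjI allI impI)
      show "0 < \<delta>1" by (rule \<delta>1(1))
      fix \<tau> h t0 assume H: "0 < \<tau> \<and> \<tau> < min \<delta>1 \<tau>s \<and> 0 < h \<and> h < \<delta>1 \<and> 0 \<le> t0 \<and> t0 + h \<le> T"
      then have t: "0 < \<tau>" "\<tau> < \<delta>1" "\<tau> < \<tau>s" "0 < h" "h < \<delta>1" "0 \<le> t0" "t0 + h \<le> T" by auto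
      have t1: "\<tau> < \<tau>1" "\<tau> \<le> 1" using t \<tau>s by auto
      interpret L: lat "N_flow m \<alpha> \<beta> \<tau>" \<tau> K M "\<lambda>n j. fst (Gd m \<alpha> \<beta> \<tau> (d \<tau>) n j)" "\<lambda>n j. snd (Gd m \<alpha> \<beta> \<tau> (d \<tau>) n j)"
        by (rule latI[OF t(1) t1])
      define n0 where "n0 = nat \<lfloor>t0 / \<tau>\<rfloor>"
      define n1 where "n1 = nat \<lfloor>(t0 + h) / \<tau>\<rfloor>"
      define k where "k = n1 - n0"
      have f0: "real n0 * \<tau> \<le> t0" "t0 < (real n0 + 1) * \<tau>" unfolding n0_def by (rule nat_floor_facts[OF t(1) t(6)])+
      have f1: "real n1 * \<tau> \<le> t0 + h" "t0 + h < (real n1 + 1) * \<tau>" unfolding n1_def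
        by (rule nat_floor_facts[OF t(1)], use t in simp)+
      have n01: "n0 \<le> n1" unfolding n0_def n1_def using t by (intro nat_mono floor_mono divide_right_mono) auto
      have n1k: "n1 = n0 + k" unfolding k_def using n01 by simp
      have kt: "real k * \<tau> < h + \<tau>"
      proof -
        have "real k * \<tau> = real n1 * \<tau> - real n0 * \<tau>" unfolding k_def using n01 by (simp add: of_nat_diff algebra_simps)
        then show ?thesis using f0 f1 by (simp add: algebra_simps)
      qed
      have k0: "0 \<le> real k * \<tau>" using t by simp
      have n0T: "real n0 * \<tau> \<le> T" using f0 t by linarith
      have kT: "real k * \<tau> \<le> T"
      proof -
        have "real k * \<tau> \<le> real n1 * \<tau>" unfolding k_def using n01 t by (intro mult_right_mono) auto
        then show ?thesis using f1 t by linarith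
      qed
      have kd: "real k * \<tau> \<le> \<delta>2" using kt t \<delta>1 by linarith
      have len: "(of_int (p + 2 * int k - 1) + 1) * \<tau> - of_int p * \<tau> = 2 * (real k * \<tau>)" for p
        by (simp add: algebra_simps)
      have eta_a: "L.Ua 0 p (2 * int k) \<le> \<delta>2 / 2" for p
      proof -
        have "ennreal (\<Sum>j\<in>{p..p + 2 * int k - 1}. \<tau> * (cmod (fst (d \<tau> j)))^2) \<le> 2 * eu \<tau> + 2 * (\<integral>\<^sup>+ x. ennreal ((cmod (u0 x))^2) * indicator {of_int p * \<tau> .. (of_int (p + 2 * int k - 1) + 1) * \<tau>} x \<partial>lborel)"
          unfolding eu_def by (rule win_u[OF t(1) u0(1)])
        also have "\<dots> \<le> ennreal (2 * (\<delta>2 / 8) + 2 * (\<delta>2 / 8))"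
        proof (rule ennreal_2sum)
          show "eu \<tau> \<le> ennreal (\<delta>2 / 8)" using \<tau>2(2)[OF t(1)] t \<delta>1 by (auto intro: less_imp_le)
          have "2 * (real k * \<tau>) \<le> \<delta>u" using kt t \<delta>1 by linarith
          then show "(\<integral>\<^sup>+ x. ennreal ((cmod (u0 x))^2) * indicator {of_int p * \<tau> .. (of_int (p + 2 * int k - 1) + 1) * \<tau>} x \<partial>lborel) \<le> ennreal (\<delta>2 / 8)"
            using \<delta>u(2)[where a="of_int p * \<tau>" and b="(of_int (p + 2 * int k - 1) + 1) * \<tau>"] len[of p] by (auto intro: less_imp_le)
        qed (use \<delta>2 in auto)
        finally have "(\<Sum>j\<in>{p..p + 2 * int k - 1}. \<tau> * (cmod (fst (d \<tau> j)))^2) \<le> \<delta>2 / 2"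
          using ennreal_le_iff[of "2 * (\<delta>2 / 8) + 2 * (\<delta>2 / 8)"] \<delta>2 by auto
        then show ?thesis unfolding L.Ua_def L.ma_def Gd_0[OF t(1)] by simp
      qed
      have eta_b: "L.Ub 0 p (2 * int k) \<le> \<delta>2 / 2" for p
      proof -
        have "ennreal (\<Sum>j\<in>{p..p + 2 * int k - 1}. \<tau> * (cmod (snd (d \<tau> j)))^2) \<le> 2 * ev \<tau> + 2 * (\<integral>\<^sup>+ x. ennreal ((cmod (v0 x))^2) * indicator {of_int p * \<tau> .. (of_int (p + 2 * int k - 1) + 1) * \<tau>} x \<partial>lborel)"
          unfolding ev_def by (rule win_v[OF t(1) v0(1)])
        also have "\<dots> \<le> ennreal (2 * (\<delta>2 / 8) + 2 * (\<delta>2 / 8))"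
        proof (rule ennreal_2sum)
          show "ev \<tau> \<le> ennreal (\<delta>2 / 8)" using \<tau>2(2)[OF t(1)] t \<delta>1 by (auto intro: less_imp_le)
          have "2 * (real k * \<tau>) \<le> \<delta>v" using kt t \<delta>1 by linarith
          then show "(\<integral>\<^sup>+ x. ennreal ((cmod (v0 x))^2) * indicator {of_int p * \<tau> .. (of_int (p + 2 * int k - 1) + 1) * \<tau>} x \<partial>lborel) \<le> ennreal (\<delta>2 / 8)"
            using \<delta>v(2)[where a="of_int p * \<tau>" and b="(of_int (p + 2 * int k - 1) + 1) * \<tau>"] len[of p] by (auto intro: less_imp_le)
        qed (use \<delta>2 in auto)
        finally have "(\<Sum>j\<in>{p..p + 2 * int k - 1}. \<tau> * (cmod (snd (d \<tau> j)))^2) \<le> \<delta>2 / 2"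
          using ennreal_le_iff[of "2 * (\<delta>2 / 8) + 2 * (\<delta>2 / 8)"] \<delta>2 by auto
        then show ?thesis unfolding L.Ub_def L.mb_def Gd_0[OF t(1)] by simp
      qed
      have eta0: "0 \<le> \<delta>2 / 2" using \<delta>2 by simp
      have bl: "bnd K M T (\<delta>2 / 2) (real k * \<tau>) < \<epsilon>" by (rule \<delta>2(2)) (use \<delta>2 k0 kd in auto)
      define B where "B = bnd K M T (\<delta>2 / 2) (real k * \<tau>)"
      show "(\<integral>\<^sup>+ x. ennreal ((cmod (ts_u m \<alpha> \<beta> \<tau> (d \<tau>) (x + h) (t0 + h) - ts_u m \<alpha> \<beta> \<tau> (d \<tau>) x t0))^2) \<partial>lborel)
               < ennreal (1 * (\<epsilon> + \<tau>))"
      proof -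
        define g where "g J = (cmod (fst (Gd m \<alpha> \<beta> \<tau> (d \<tau>) n1 (J + int n1)) - fst (Gd m \<alpha> \<beta> \<tau> (d \<tau>) n0 (J + int n0))))^2" for J
        have ueq: "(cmod (ts_u m \<alpha> \<beta> \<tau> (d \<tau>) (x + h) (t0 + h) - ts_u m \<alpha> \<beta> \<tau> (d \<tau>) x t0))^2 = g \<lfloor>(x - t0) / \<tau>\<rfloor>" for x
        proof -
          have "x + h - (t0 + h) = x - t0" by simp
          then show ?thesis unfolding g_def ts_u_G[OF t(1)] n0_def n1_def by simp
        qed
        have S: "\<tau> * (\<Sum>J\<in>{p..q}. g J) \<le> B" for p q
        proof -
          have "(\<Sum>J\<in>{p..q}. g J) = (\<Sum>J\<in>{p..q}. (\<lambda>J. (cmod (fst (Gd m \<alpha> \<beta> \<tau> (d \<tau>) (n0 + k) (J + int k)) - fst (Gd m \<alpha> \<beta> \<tau> (d \<tau>) n0 J)))^2) (J + int n0))"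
            unfolding g_def n1k by (simp add: algebra_simps)
          also have "\<dots> = (\<Sum>J\<in>{p + int n0..q + int n0}. (cmod (fst (Gd m \<alpha> \<beta> \<tau> (d \<tau>) (n0 + k) (J + int k)) - fst (Gd m \<alpha> \<beta> \<tau> (d \<tau>) n0 J)))^2)"
            by (rule sum_shift_int)
          finally have e: "\<tau> * (\<Sum>J\<in>{p..q}. g J) = (\<Sum>J\<in>{p + int n0..q + int n0}. \<tau> * (cmod (fst (Gd m \<alpha> \<beta> \<tau> (d \<tau>) (n0 + k) (J + int k)) - fst (Gd m \<alpha> \<beta> \<tau> (d \<tau>) n0 J)))^2)"
            by (simp add: sum_distrib_left)
          show ?thesis unfolding e B_def by (rule L.disc_u[OF _ eta0 eta_a eta_b n0T kT]) (use T in simp)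
        qed
        have "(\<integral>\<^sup>+ x. ennreal (g \<lfloor>(x - t0) / \<tau>\<rfloor>) \<partial>lborel) < ennreal (1 * (\<epsilon> + \<tau>))"
          by (rule int_bound_helper[OF t(1) _ S]) (use bl t in \<open>auto simp: g_def B_def\<close>)
        then show ?thesis unfolding ueq .
      qed
      show "(\<integral>\<^sup>+ x. ennreal ((cmod (ts_v m \<alpha> \<beta> \<tau> (d \<tau>) (x - h) (t0 + h) - ts_v m \<alpha> \<beta> \<tau> (d \<tau>) x t0))^2) \<partial>lborel)
               < ennreal (1 * (\<epsilon> + \<tau>))"
      proof -
        define g where "g J = (cmod (snd (Gd m \<alpha> \<beta> \<tau> (d \<tau>) n1 (J - int n1)) - snd (Gd m \<alpha> \<beta> \<tau> (d \<tau>) n0 (J - int n0))))^2" for J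
        have veq: "(cmod (ts_v m \<alpha> \<beta> \<tau> (d \<tau>) (x - h) (t0 + h) - ts_v m \<alpha> \<beta> \<tau> (d \<tau>) x t0))^2 = g \<lfloor>(x - (- t0)) / \<tau>\<rfloor>" for x
        proof -
          have a1: "x - h + (t0 + h) = x - (- t0)" and a2: "x + t0 = x - (- t0)" by simp_all
          show ?thesis unfolding g_def ts_v_G[OF t(1)] n0_def[symmetric] n1_def[symmetric] a1 a2 ..
        qed
        have S: "\<tau> * (\<Sum>J\<in>{p..q}. g J) \<le> B" for p q
        proof -
          have "(\<Sum>J\<in>{p..q}. g J) = (\<Sum>J\<in>{p..q}. (\<lambda>J. (cmod (snd (Gd m \<alpha> \<beta> \<tau> (d \<tau>) (n0 + k) (J - int k)) - snd (Gd m \<alpha> \<beta> \<tau> (d \<tau>) n0 J)))^2) (J + (- int n0)))"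
            unfolding g_def n1k by (simp add: algebra_simps)
          also have "\<dots> = (\<Sum>J\<in>{p + (- int n0)..q + (- int n0)}. (cmod (snd (Gd m \<alpha> \<beta> \<tau> (d \<tau>) (n0 + k) (J - int k)) - snd (Gd m \<alpha> \<beta> \<tau> (d \<tau>) n0 J)))^2)"
            by (rule sum_shift_int)
          finally have e: "\<tau> * (\<Sum>J\<in>{p..q}. g J) = (\<Sum>J\<in>{p + (- int n0)..q + (- int n0)}. \<tau> * (cmod (snd (Gd m \<alpha> \<beta> \<tau> (d \<tau>) (n0 + k) (J - int k)) - snd (Gd m \<alpha> \<beta> \<tau> (d \<tau>) n0 J)))^2)"
            by (simp add: sum_distrib_left)
          show ?thesis unfolding e B_def by (rule L.disc_v[OF _ eta0 eta_a eta_b n0T kT]) (use T in simp)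
        qed
        have "(\<integral>\<^sup>+ x. ennreal (g \<lfloor>(x - (- t0)) / \<tau>\<rfloor>) \<partial>lborel) < ennreal (1 * (\<epsilon> + \<tau>))"
          by (rule int_bound_helper[OF t(1) _ S]) (use bl t in \<open>auto simp: g_def B_def\<close>)
        then show ?thesis unfolding veq .
      qed
    qed
  qed
  qed
qed


end
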